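(* Let $Q\in\mathbb{R}^{n\times n}$ be symmetric, $q\in\mathbb{R}^n$, $a_i\in\mathbb{R}^n$, $b_i\in\mathbb{R}$ ($i=1,\dots,p$), $\mathcal{F}=\{x:\langle a_i,x\rangle\le b_i,\ i=1,\dots,p\}$, and consider $$(\mathcal{P}_Q)\qquad \min_{x\in\mathcal{F}}\ \phi(x):=\tfrac12\langle Qx,x\rangle+\langle q,x\rangle .$$ Fix $\sigma>\max\{0,\lambda_{\max}(Q)\}$ and the DC decomposition $\phi=g-h$ with $g(x)=\frac\sigma2\|x\|^2+\langle q,x\rangle$, $h(x)=\frac12\langle(\sigma I-Q)x,x\rangle$ (so both are strongly convex with parameter $\rho:=\sigma-\lambda_{\max}(Q)>0$ if $\lambda_{\max}(Q)\ge0$, and $\rho:=\min\{\sigma,\sigma-\lambda_{\max}(Q)\}$ in general). Suppose $(\mathcal{P}_Q)$ has a solution, and let $\{x_k\}$ be an infinite sequence generated by Algorithm BDCA (see context) applied to this decomposition. Then $\{x_k\}$ converges geometrically to a KKT point $x^*$ of $(\mathcal{P}_Q)$: there exist $C>0$ and $\mu\in(0,1)$ such that $\|x_k-x^*\|\le C\mu^k$ for all sufficiently large $k$.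
   Context: $\lambda_{\max}(Q)$ is the largest eigenvalue of $Q$. A point $\bar x$ is a KKT point of $(\mathcal{P}_Q)$ if there exist $\mu_1,\dots,\mu_p\ge0$ with $0=Q\bar x+q+\sum_i\mu_ia_i$, $\mu_i(\langle a_i,\bar x\rangle-b_i)=0$ and $\langle a_i,\bar x\rangle\le b_i$ for all $i$. For $\bar x\in\mathcal{F}$, $I(\bar x):=\{i:\langle a_i,\bar x\rangle=b_i\}$. Algorithm BDCA for $\phi=g-h$ on $\mathcal{F}$: input $x_0\in\mathcal{F}$, $\alpha>0$, $\beta\in(0,1)$. At iteration $k$: set $u_k:=\nabla h(x_k)=(\sigma I-Q)x_k$ and let $y_k$ be the unique minimizer of $g(x)-\langle u_k,x\rangle$ over $\mathcal{F}$ (equivalently $y_k=P_{\mathcal{F}}(x_k-\frac1\sigma(Qx_k+q))$, $P_{\mathcal F}$ the Euclidean projection); set $d_k:=y_k-x_k$; if $d_k=0$ stop. If $I(y_k)\subseteq I(x_k)$: choose any $\bar\lambda_k\ge 0$, set $\lambda_k:=\bar\lambda_k$ and reduce it (to some value in $[0,\bar\lambda_k]$) so that $y_k+\lambda_kd_k\in\mathcal{F}$; then while $\phi(y_k+\lambda_kd_k)>\phi(y_k)-\alpha\lambda_k^2\|d_k\|^2$, replace $\lambda_k$ by $\beta\lambda_k$. Otherwise set $\lambda_k:=0$. Set $x_{k+1}:=y_k+\lambda_kd_k$. *)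

theory Defs
  imports "HOL-Analysis.Analysis"
begin

definition lambda_max :: "real^'n^'n \<Rightarrow> real" where
  "lambda_max Q = Max {l. \<exists>v. v \<noteq> 0 \<and> Q *v v = l *\<^sub>R v}"

definition phiQ :: "real^'n^'n \<Rightarrow> real^'n \<Rightarrow> real^'n \<Rightarrow> real" where
  "phiQ Q q x = (1/2) * ((Q *v x) \<bullet> x) + q \<bullet> x"

definition feas :: "(nat \<Rightarrow> real^'n) \<Rightarrow> (nat \<Rightarrow> real) \<Rightarrow> nat \<Rightarrow> (real^'n) set" where
  "feas a b p = {x. \<forall>i<p. a i \<bullet> x \<le> b i}"

definition active :: "(nat \<Rightarrow> real^'n) \<Rightarrow> (nat \<Rightarrow> real) \<Rightarrow> nat \<Rightarrow> real^'n \<Rightarrow> nat set" where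
  "active a b p x = {i. i < p \<and> a i \<bullet> x = b i}"

definition dc_g :: "real \<Rightarrow> real^'n \<Rightarrow> real^'n \<Rightarrow> real" where
  "dc_g \<sigma> q x = (\<sigma>/2) * (norm x)^2 + q \<bullet> x"

definition dc_h :: "real \<Rightarrow> real^'n^'n \<Rightarrow> real^'n \<Rightarrow> real" where
  "dc_h \<sigma> Q x = (1/2) * (((mat \<sigma> - Q) *v x) \<bullet> x)"

definition kkt :: "real^'n^'n \<Rightarrow> real^'n \<Rightarrow> (nat \<Rightarrow> real^'n) \<Rightarrow> (nat \<Rightarrow> real) \<Rightarrow> nat \<Rightarrow> real^'n \<Rightarrow> bool" where
  "kkt Q q a b p x \<longleftrightarrow>
     (\<exists>\<mu>::nat \<Rightarrow> real. (\<forall>i<p. \<mu> i \<ge> 0 \<and> \<mu> i * (a i \<bullet> x - b i) = 0 \<and> a i \<bullet> x \<le> b i) \<and>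
        Q *v x + q + (\<Sum>i<p. \<mu> i *\<^sub>R a i) = 0)"

text \<open>One (non-terminating) iteration of BDCA: x' is a possible successor of x.
  y is the unique minimizer of g - <u,.> over F with u = grad h(x) = (sigma I - Q) x,
  d = y - x must be nonzero (the algorithm does not stop), and the step size is
  obtained from some feasible initial trial lam0 \<ge> 0 (a value in [0, lam_bar] for
  some lam_bar \<ge> 0) by backtracking with factor beta until the Armijo-type
  condition holds (the j-th trial is the first accepted one).\<close>
definition bdca_step :: "real^'n^'n \<Rightarrow> real^'n \<Rightarrow> (nat \<Rightarrow> real^'n) \<Rightarrow> (nat \<Rightarrow> real) \<Rightarrow> nat \<Rightarrow>
    real \<Rightarrow> real \<Rightarrow> real \<Rightarrow> real^'n \<Rightarrow> real^'n \<Rightarrow> bool" where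
  "bdca_step Q q a b p \<sigma> \<alpha> \<beta> x x' \<longleftrightarrow>
     (\<exists>y. y \<in> feas a b p \<and>
        (\<forall>z\<in>feas a b p. dc_g \<sigma> q y - ((mat \<sigma> - Q) *v x) \<bullet> y \<le> dc_g \<sigma> q z - ((mat \<sigma> - Q) *v x) \<bullet> z) \<and>
        y - x \<noteq> 0 \<and>
        (if active a b p y \<subseteq> active a b p x then
           (\<exists>lam_bar lam0 j. lam_bar \<ge> 0 \<and> 0 \<le> lam0 \<and> lam0 \<le> lam_bar \<and>
              y + lam0 *\<^sub>R (y - x) \<in> feas a b p \<and>
              (\<forall>i<j. phiQ Q q (y + (\<beta>^i * lam0) *\<^sub>R (y - x)) >
                      phiQ Q q y - \<alpha> * (\<beta>^i * lam0)^2 * (norm (y - x))^2) \<and>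
              phiQ Q q (y + (\<beta>^j * lam0) *\<^sub>R (y - x)) \<le>
                      phiQ Q q y - \<alpha> * (\<beta>^j * lam0)^2 * (norm (y - x))^2 \<and>
              x' = y + (\<beta>^j * lam0) *\<^sub>R (y - x))
         else x' = y))"

end

theory Submission
  imports Defs
begin

definition icone :: "('k \<Rightarrow> 'a::real_vector) \<Rightarrow> 'k set \<Rightarrow> 'a set" where
  "icone c I = {v. \<exists>l. (\<forall>i\<in>I. 0 \<le> l i) \<and> v = (\<Sum>i\<in>I. l i *\<^sub>R c i)}"

lemma icone_in_hull:
  assumes "finite I" "\<forall>i\<in>I. 0 \<le> l i"
  shows "(\<Sum>i\<in>I. l i *\<^sub>R c i) \<in> convex_cone hull (c ` I)"
  using assms
proof (induction I rule: finite_induct)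
  case empty
  then show ?case by (simp add: convex_cone_hull_contains_0)
next
  case (insert x F)
  have "(\<Sum>i\<in>F. l i *\<^sub>R c i) \<in> convex_cone hull (c ` insert x F)"
    using insert by (meson hull_mono image_mono insert_iff subsetD subset_insertI)
  moreover have "l x *\<^sub>R c x \<in> convex_cone hull (c ` insert x F)"
    using insert by (simp add: convex_cone_hull_mul hull_inc)
  ultimately show ?case using insert by (simp add: convex_cone_hull_add)
qed

lemma icone_convex_cone:
  assumes "finite I" shows "convex_cone (icone c I)"
  unfolding convex_cone_iff
proof (intro conjI ballI allI impI)
  show "0 \<in> icone c I" unfolding icone_def by (rule CollectI, rule exI[of _ "\<lambda>_. 0"]) simp
next
  fix x y assume "x \<in> icone c I" "y \<in> icone c I"
  then obtain l1 l2 where "\<forall>i\<in>I. 0 \<le> l1 i" "x = (\<Sum>i\<in>I. l1 i *\<^sub>R c i)"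
      "\<forall>i\<in>I. 0 \<le> l2 i" "y = (\<Sum>i\<in>I. l2 i *\<^sub>R c i)" unfolding icone_def by blast
  then show "x + y \<in> icone c I" unfolding icone_def
    by (intro CollectI exI[of _ "\<lambda>i. l1 i + l2 i"]) (simp add: sum.distrib scaleR_add_left)
next
  fix x and t :: real assume "x \<in> icone c I" "0 \<le> t"
  then obtain l1 where "\<forall>i\<in>I. 0 \<le> l1 i" "x = (\<Sum>i\<in>I. l1 i *\<^sub>R c i)" unfolding icone_def by blast
  then show "t *\<^sub>R x \<in> icone c I" using \<open>0 \<le> t\<close> unfolding icone_def
    by (intro CollectI exI[of _ "\<lambda>i. t * l1 i"]) (simp add: scaleR_sum_right)
qed

lemma icone_eq_hull:
  assumes "finite I" shows "icone c I = convex_cone hull (c ` I)"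
proof
  show "icone c I \<subseteq> convex_cone hull (c ` I)"
    using icone_in_hull[OF assms] unfolding icone_def by blast
  have "c ` I \<subseteq> icone c I"
  proof
    fix v assume "v \<in> c ` I"
    then obtain j where j: "j \<in> I" "v = c j" by blast
    have "(\<Sum>i\<in>I. (if i = j then 1 else 0) *\<^sub>R c i) = c j"
    proof -
      have "(\<Sum>i\<in>I. (if i = j then 1 else 0) *\<^sub>R c i) = (\<Sum>i\<in>I. if i = j then c i else 0)"
        by (rule sum.cong) auto
      also have "\<dots> = c j" using j assms by simp
      finally show ?thesis .
    qed
    then show "v \<in> icone c I" unfolding icone_def using j
      by (intro CollectI exI[of _ "\<lambda>i. if i = j then 1 else 0"]) auto
  qed
  then show "convex_cone hull (c ` I) \<subseteq> icone c I"
    using hull_minimal[of "c ` I" "icone c I" convex_cone] icone_convex_cone[OF assms, of c] by blast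
qed

lemma icone_polyhedron:
  fixes c :: "'k \<Rightarrow> 'a::euclidean_space"
  assumes "finite I" shows "polyhedron (icone c I)"
  by (simp add: icone_eq_hull[OF assms] polyhedron_convex_cone_hull assms)

lemma icone_closed:
  fixes c :: "'k \<Rightarrow> 'a::euclidean_space"
  assumes "finite I" shows "closed (icone c I)"
  using icone_polyhedron[OF assms] polyhedron_imp_closed by blast

lemma icone_mem: "finite I \<Longrightarrow> \<forall>i\<in>I. 0 \<le> l i \<Longrightarrow> (\<Sum>i\<in>I. l i *\<^sub>R c i) \<in> icone c I"
  unfolding icone_def by blast

lemma icone_gen: "finite I \<Longrightarrow> k \<in> I \<Longrightarrow> c k \<in> icone c I"
  by (simp add: icone_eq_hull hull_inc)

lemma normal_cone_poly:
  fixes c :: "'k \<Rightarrow> 'a::euclidean_space"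
  assumes fin: "finite I" and y: "\<forall>k\<in>I. c k \<bullet> y \<le> e k"
   and w: "\<forall>z. (\<forall>k\<in>I. c k \<bullet> z \<le> e k) \<longrightarrow> w \<bullet> (z - y) \<le> 0"
  shows "w \<in> icone c {k\<in>I. c k \<bullet> y = e k}"
proof (rule ccontr)
  define A where "A = {k\<in>I. c k \<bullet> y = e k}"
  have finA: "finite A" using fin unfolding A_def by simp
  assume "w \<notin> icone c {k\<in>I. c k \<bullet> y = e k}"
  hence nw: "w \<notin> icone c A" unfolding A_def .
  have cc: "convex_cone (icone c A)" by (rule icone_convex_cone[OF finA])
  hence cvx: "convex (icone c A)" unfolding convex_cone_def by blast
  obtain u \<beta> where u1: "u \<bullet> w < \<beta>" and u2: "\<forall>x\<in>icone c A. u \<bullet> x > \<beta>"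
    using separating_hyperplane_closed_point[OF cvx icone_closed[OF finA] nw] by blast
  have "0 \<in> icone c A" using cc convex_cone_contains_0 by blast
  hence b0: "\<beta> < 0" using u2 by fastforce
  have uc: "u \<bullet> c k \<ge> 0" if k: "k \<in> A" for k
  proof (rule ccontr)
    assume neg: "\<not> u \<bullet> c k \<ge> 0"
    define t where "t = \<beta> / (u \<bullet> c k)"
    have t0: "t \<ge> 0" unfolding t_def using neg b0 by (simp add: divide_nonpos_neg)
    have "t *\<^sub>R c k \<in> icone c A" using convex_cone_scaleR[OF cc t0 icone_gen[OF finA k]] .
    hence "u \<bullet> (t *\<^sub>R c k) > \<beta>" using u2 by blast
    moreover have "u \<bullet> (t *\<^sub>R c k) = \<beta>" unfolding t_def using neg by simp
    ultimately show False by simp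
  qed
  define v where "v = - u"
  have wv: "w \<bullet> v > 0" unfolding v_def using u1 b0 by (simp add: inner_commute)
  define B where "B = I - A"
  have finB: "finite B" using fin unfolding B_def by simp
  have Bslack: "c k \<bullet> y < e k" if "k \<in> B" for k using that y unfolding B_def A_def by force
  define T where "T = insert 1 ((\<lambda>k. (e k - c k \<bullet> y) / (\<bar>c k \<bullet> v\<bar> + 1)) ` B)"
  define t where "t = Min T"
  have finT: "finite T" unfolding T_def using finB by simp
  have Tpos: "\<forall>s\<in>T. s > 0" unfolding T_def using Bslack
    by (auto intro!: divide_pos_pos simp: add_pos_nonneg)
  have t0: "t > 0" unfolding t_def using finT Tpos by (simp add: Min_gr_iff T_def)
  have tB: "t * (\<bar>c k \<bullet> v\<bar> + 1) \<le> e k - c k \<bullet> y" if "k \<in> B" for k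
  proof -
    have "t \<le> (e k - c k \<bullet> y) / (\<bar>c k \<bullet> v\<bar> + 1)"
      unfolding t_def using finT that by (auto simp: T_def intro!: Min_le)
    thus ?thesis by (simp add: pos_le_divide_eq add_pos_nonneg)
  qed
  define z where "z = y + t *\<^sub>R v"
  have "\<forall>k\<in>I. c k \<bullet> z \<le> e k"
  proof
    fix k assume kI: "k \<in> I"
    have cz: "c k \<bullet> z = c k \<bullet> y + t * (c k \<bullet> v)" unfolding z_def by (simp add: inner_add_right)
    show "c k \<bullet> z \<le> e k"
    proof (cases "k \<in> A")
      case True
      have "c k \<bullet> v \<le> 0" using uc[OF True] unfolding v_def by (simp add: inner_commute)
      hence "t * (c k \<bullet> v) \<le> 0" using t0 by (simp add: mult_nonneg_nonpos)
      thus ?thesis using cz True unfolding A_def by simp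
    next
      case False
      hence kB: "k \<in> B" using kI unfolding B_def by blast
      have "t * (c k \<bullet> v) \<le> t * (\<bar>c k \<bullet> v\<bar> + 1)" using t0 by (intro mult_left_mono) auto
      thus ?thesis using cz tB[OF kB] by simp
    qed
  qed
  hence "w \<bullet> (z - y) \<le> 0" using w by blast
  moreover have "w \<bullet> (z - y) = t * (w \<bullet> v)" unfolding z_def by simp
  ultimately show False using t0 wv by (metis mult_pos_pos not_less)
qed

lemma icone_bounded_rep:
  fixes c :: "'k \<Rightarrow> 'a::euclidean_space"
  assumes fin: "finite I"
  shows "\<exists>\<kappa>\<ge>0. \<forall>v\<in>icone c I. \<exists>l. (\<forall>i\<in>I. 0 \<le> l i) \<and> v = (\<Sum>i\<in>I. l i *\<^sub>R c i) \<and> sum l I \<le> \<kappa> * norm v"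
proof -
  define D where "D = {v. \<exists>l. (\<forall>i\<in>I. 0 \<le> l i) \<and> sum l I \<le> 1 \<and> v = (\<Sum>i\<in>I. l i *\<^sub>R c i)}"
  have sub1: "insert 0 (c ` I) \<subseteq> D"
  proof
    fix x assume "x \<in> insert 0 (c ` I)"
    then consider "x = 0" | j where "j \<in> I" "x = c j" by blast
    then show "x \<in> D"
    proof cases
      case 1 then show ?thesis unfolding D_def by (intro CollectI exI[of _ "\<lambda>_. 0"]) simp
    next
      case 2
      have e1: "(\<Sum>i\<in>I. (if i = j then 1 else 0) *\<^sub>R c i) = (\<Sum>i\<in>I. if i = j then c i else 0)"
        by (rule sum.cong) auto
      have e2: "(\<Sum>i\<in>I. (if i = j then 1 else 0::real)) = 1" using 2 fin by simp
      show ?thesis unfolding D_def using 2 e1 e2 fin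
        by (intro CollectI exI[of _ "\<lambda>i. if i = j then 1 else 0"]) auto
    qed
  qed
  have cD: "convex D" unfolding convex_def
  proof (intro allI ballI impI)
    fix x y and u v :: real assume xD: "x \<in> D" and yD: "y \<in> D" and uv: "0 \<le> u" "0 \<le> v" "u + v = 1"
    obtain l1 where l1: "\<forall>i\<in>I. 0 \<le> l1 i" "sum l1 I \<le> 1" "x = (\<Sum>i\<in>I. l1 i *\<^sub>R c i)" using xD unfolding D_def by blast
    obtain l2 where l2: "\<forall>i\<in>I. 0 \<le> l2 i" "sum l2 I \<le> 1" "y = (\<Sum>i\<in>I. l2 i *\<^sub>R c i)" using yD unfolding D_def by blast
    have "sum (\<lambda>i. u * l1 i + v * l2 i) I = u * sum l1 I + v * sum l2 I"
      by (simp add: sum.distrib sum_distrib_left)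
    also have "\<dots> \<le> u * 1 + v * 1" using uv l1 l2 by (intro add_mono mult_left_mono) auto
    finally have s: "sum (\<lambda>i. u * l1 i + v * l2 i) I \<le> 1" using uv by simp
    have "u *\<^sub>R x + v *\<^sub>R y = (\<Sum>i\<in>I. (u * l1 i + v * l2 i) *\<^sub>R c i)"
      using l1 l2 by (simp add: scaleR_sum_right sum.distrib scaleR_add_left)
    then show "u *\<^sub>R x + v *\<^sub>R y \<in> D" unfolding D_def using s uv l1 l2
      by (intro CollectI exI[of _ "\<lambda>i. u * l1 i + v * l2 i"]) auto
  qed
  have DH: "D = convex hull (insert 0 (c ` I))"
  proof
    show "convex hull insert 0 (c ` I) \<subseteq> D"
      using hull_minimal[of "insert 0 (c ` I)" D convex] sub1 cD by blast
    show "D \<subseteq> convex hull insert 0 (c ` I)"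
    proof
      fix v assume "v \<in> D"
      then obtain l where l: "\<forall>i\<in>I. 0 \<le> l i" "sum l I \<le> 1" "v = (\<Sum>i\<in>I. l i *\<^sub>R c i)" unfolding D_def by blast
      show "v \<in> convex hull insert 0 (c ` I)"
      proof (cases "sum l I = 0")
        case True
        hence "\<forall>i\<in>I. l i = 0" using sum_nonneg_eq_0_iff[OF fin] l by blast
        hence "v = 0" using l by simp
        then show ?thesis by (simp add: hull_inc)
      next
        case False
        define s where "s = sum l I"
        have s0: "s > 0" using False l sum_nonneg[of I l] unfolding s_def by force
        have inh: "(\<Sum>i\<in>I. (l i / s) *\<^sub>R c i) \<in> convex hull insert 0 (c ` I)"
        proof (rule convex_sum[OF fin convex_convex_hull])
          show "(\<Sum>i\<in>I. l i / s) = 1" using s0 unfolding s_def by (simp add: sum_divide_distrib[symmetric])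
          show "\<And>i. i \<in> I \<Longrightarrow> 0 \<le> l i / s" using l s0 by simp
          show "\<And>i. i \<in> I \<Longrightarrow> c i \<in> convex hull insert 0 (c ` I)" by (simp add: hull_inc)
        qed
        have z: "0 \<in> convex hull insert 0 (c ` I)" by (simp add: hull_inc)
        have "v = s *\<^sub>R (\<Sum>i\<in>I. (l i / s) *\<^sub>R c i) + (1 - s) *\<^sub>R 0"
          using l s0 by (simp add: scaleR_sum_right)
        then show ?thesis
          using convexD[OF convex_convex_hull inh z, of s "1 - s"] s0 l(2) unfolding s_def by simp
      qed
    qed
  qed
  have "polyhedron D" unfolding DH using fin
    by (intro polytope_imp_polyhedron polytope_convex_hull) simp
  then obtain F where F: "finite F" "D = \<Inter> F" "\<forall>h\<in>F. \<exists>a b. a \<noteq> 0 \<and> h = {x. a \<bullet> x \<le> b}"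
    unfolding polyhedron_def by blast
  have "\<forall>h\<in>F. \<exists>ab. h = {x. fst ab \<bullet> x \<le> snd ab}"
  proof
    fix h assume "h \<in> F"
    then obtain a b where "h = {x. a \<bullet> x \<le> b}" using F(3) by blast
    thus "\<exists>ab. h = {x. fst ab \<bullet> x \<le> snd ab}" by (intro exI[of _ "(a,b)"]) simp
  qed
  from bchoice[OF this] obtain ab where ab: "\<forall>h\<in>F. h = {x. fst (ab h) \<bullet> x \<le> snd (ab h)}" by blast
  define g where "g h = fst (ab h)" for h
  define \<beta> where "\<beta> h = snd (ab h)" for h
  have gb: "\<forall>h\<in>F. h = {x. g h \<bullet> x \<le> \<beta> h}" using ab unfolding g_def \<beta>_def by simp
  have zD: "0 \<in> D" using sub1 by blast
  have hm: "x \<in> h \<longleftrightarrow> g h \<bullet> x \<le> \<beta> h" if "h \<in> F" for h x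
    by (subst bspec[OF gb that]) simp
  have Dm: "x \<in> D \<longleftrightarrow> (\<forall>h\<in>F. g h \<bullet> x \<le> \<beta> h)" for x
    using hm F(2) by auto
  have b0: "\<beta> h \<ge> 0" if "h \<in> F" for h using zD Dm that by fastforce
  define T where "T = insert 1 ((\<lambda>h. \<beta> h / (norm (g h) + 1)) ` {h\<in>F. \<beta> h > 0})"
  define \<epsilon> where "\<epsilon> = Min T"
  have np: "\<And>h. 0 < norm (g h) + 1" by (simp add: add_nonneg_pos)
  have finT: "finite T" unfolding T_def using F(1) by simp
  have e0: "\<epsilon> > 0" unfolding \<epsilon>_def using finT np by (auto simp: T_def Min_gr_iff intro!: divide_pos_pos)
  have eb: "\<epsilon> \<le> \<beta> h / (norm (g h) + 1)" if "h \<in> F" "\<beta> h > 0" for h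
    unfolding \<epsilon>_def using finT that by (auto simp: T_def intro!: Min_le)
  have small: "v \<in> D" if vC: "v \<in> icone c I" and vn: "norm v \<le> \<epsilon>" for v
  proof -
    obtain l where l: "\<forall>i\<in>I. 0 \<le> l i" "v = (\<Sum>i\<in>I. l i *\<^sub>R c i)" using vC unfolding icone_def by blast
    show ?thesis
    proof (cases "sum l I = 0")
      case True
      hence "\<forall>i\<in>I. l i = 0" using sum_nonneg_eq_0_iff[OF fin] l by blast
      hence "v = 0" using l by simp
      then show ?thesis using zD by simp
    next
      case False
      define s where "s = sum l I"
      have s0: "s > 0" using False l sum_nonneg[of I l] unfolding s_def by force
      define d where "d = (\<Sum>i\<in>I. (l i / s) *\<^sub>R c i)"
      have dD: "d \<in> D" unfolding D_def d_def using l s0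
        by (intro CollectI exI[of _ "\<lambda>i. l i / s"]) (simp add: s_def sum_divide_distrib[symmetric])
      have vd: "v = s *\<^sub>R d" unfolding d_def using l s0 by (simp add: scaleR_sum_right)
      have "\<forall>h\<in>F. v \<in> h"
      proof
        fix h assume hF: "h \<in> F"
        show "v \<in> h"
        proof (cases "\<beta> h > 0")
          case True
          have "g h \<bullet> v \<le> norm (g h) * norm v" by (rule norm_cauchy_schwarz)
          also have "\<dots> \<le> (norm (g h) + 1) * \<epsilon>" using vn by (intro mult_mono) auto
          also have "\<dots> \<le> \<beta> h" using eb[OF hF True] np[of h] by (simp add: pos_le_divide_eq mult.commute)
          finally show ?thesis using hm[OF hF] by simp
        next
          case False
          hence bz: "\<beta> h = 0" using b0[OF hF] by simp
          have "g h \<bullet> d \<le> 0" using dD Dm hF bz by force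
          hence "g h \<bullet> v \<le> 0" unfolding vd using s0 by (simp add: mult_nonneg_nonpos)
          then show ?thesis using hm[OF hF] bz by simp
        qed
      qed
      then show ?thesis using F(2) by simp
    qed
  qed
  show ?thesis
  proof (intro exI[of _ "1/\<epsilon>"] conjI ballI)
    show "0 \<le> 1 / \<epsilon>" using e0 by simp
    fix v assume vC: "v \<in> icone c I"
    show "\<exists>l. (\<forall>i\<in>I. 0 \<le> l i) \<and> v = (\<Sum>i\<in>I. l i *\<^sub>R c i) \<and> sum l I \<le> 1 / \<epsilon> * norm v"
    proof (cases "v = 0")
      case True then show ?thesis by (intro exI[of _ "\<lambda>_. 0"]) simp
    next
      case False
      define v' where "v' = (\<epsilon> / norm v) *\<^sub>R v"
      have "v' \<in> icone c I" unfolding v'_def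
        using convex_cone_scaleR[OF icone_convex_cone[OF fin] _ vC] e0 by simp
      moreover have "norm v' = \<epsilon>" unfolding v'_def using False e0 by simp
      ultimately have "v' \<in> D" using small by simp
      then obtain l where l: "\<forall>i\<in>I. 0 \<le> l i" "sum l I \<le> 1" "v' = (\<Sum>i\<in>I. l i *\<^sub>R c i)" unfolding D_def by blast
      have nv: "norm v > 0" using False by simp
      have vv: "v = (norm v / \<epsilon>) *\<^sub>R v'" unfolding v'_def using e0 nv by simp
      show ?thesis
      proof (intro exI[of _ "\<lambda>i. (norm v / \<epsilon>) * l i"] conjI ballI)
        show "\<And>i. i \<in> I \<Longrightarrow> 0 \<le> norm v / \<epsilon> * l i" using l e0 by simp
        show "v = (\<Sum>i\<in>I. (norm v / \<epsilon> * l i) *\<^sub>R c i)" using vv l by (simp add: scaleR_sum_right)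
        have "(\<Sum>i\<in>I. norm v / \<epsilon> * l i) = norm v / \<epsilon> * sum l I" by (simp add: sum_distrib_left)
        also have "\<dots> \<le> norm v / \<epsilon> * 1" using l e0 by (intro mult_left_mono) auto
        finally show "(\<Sum>i\<in>I. norm v / \<epsilon> * l i) \<le> 1 / \<epsilon> * norm v" by simp
      qed
    qed
  qed
qed

lemma sep_icone:
  fixes c :: "'k \<Rightarrow> 'a::euclidean_space"
  assumes finA: "finite A" and nw: "w \<notin> icone c A"
  shows "\<exists>u. u \<bullet> w < 0 \<and> (\<forall>k\<in>A. u \<bullet> c k \<ge> 0)"
proof -
  have cc: "convex_cone (icone c A)" by (rule icone_convex_cone[OF finA])
  hence cvx: "convex (icone c A)" unfolding convex_cone_def by blast
  obtain u \<beta> where u1: "u \<bullet> w < \<beta>" and u2: "\<forall>x\<in>icone c A. u \<bullet> x > \<beta>"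
    using separating_hyperplane_closed_point[OF cvx icone_closed[OF finA] nw] by blast
  have "0 \<in> icone c A" using cc convex_cone_contains_0 by blast
  hence b0: "\<beta> < 0" using u2 by fastforce
  have uc: "u \<bullet> c k \<ge> 0" if k: "k \<in> A" for k
  proof (rule ccontr)
    assume neg: "\<not> u \<bullet> c k \<ge> 0"
    define t where "t = \<beta> / (u \<bullet> c k)"
    have t0: "t \<ge> 0" unfolding t_def using neg b0 by (simp add: divide_nonpos_neg)
    have "t *\<^sub>R c k \<in> icone c A" using convex_cone_scaleR[OF cc t0 icone_gen[OF finA k]] .
    hence "u \<bullet> (t *\<^sub>R c k) > \<beta>" using u2 by blast
    moreover have "u \<bullet> (t *\<^sub>R c k) = \<beta>" unfolding t_def using neg by simp
    ultimately show False by simp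
  qed
  show ?thesis using u1 b0 uc by (intro exI[of _ u]) auto
qed

lemma poly_closed: "closed {z::'a::euclidean_space. \<forall>k\<in>I. c k \<bullet> z \<le> e k}"
proof -
  have "{z::'a. \<forall>k\<in>I. c k \<bullet> z \<le> e k} = (\<Inter>k\<in>I. {z. c k \<bullet> z \<le> e k})" by auto
  thus ?thesis by (simp add: closed_INT closed_halfspace_le)
qed

lemma poly_convex: "convex {z::'a::euclidean_space. \<forall>k\<in>I. c k \<bullet> z \<le> e k}"
proof -
  have "{z::'a. \<forall>k\<in>I. c k \<bullet> z \<le> e k} = (\<Inter>k\<in>I. {z. c k \<bullet> z \<le> e k})" by auto
  thus ?thesis by (simp add: convex_INT convex_halfspace_le)
qed

lemma hoffman:
  fixes c :: "'k \<Rightarrow> 'a::euclidean_space"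
  assumes fin: "finite I" and ne: "S \<noteq> {}" and S: "S = {z. \<forall>k\<in>I. c k \<bullet> z \<le> e k}"
  shows "\<exists>\<tau>\<ge>0. \<forall>z s. 0 \<le> s \<longrightarrow> (\<forall>k\<in>I. c k \<bullet> z \<le> e k + s) \<longrightarrow> (\<exists>z'\<in>S. norm (z - z') \<le> \<tau> * s)"
proof -
  have "\<forall>J\<in>Pow I. \<exists>\<kappa>. \<kappa> \<ge> 0 \<and> (\<forall>v\<in>icone c J. \<exists>l. (\<forall>i\<in>J. 0 \<le> l i) \<and> v = (\<Sum>i\<in>J. l i *\<^sub>R c i) \<and> sum l J \<le> \<kappa> * norm v)"
  proof
    fix J assume "J \<in> Pow I"
    hence "finite J" using fin finite_subset by blast
    from icone_bounded_rep[OF this, of c] show "\<exists>\<kappa>. \<kappa> \<ge> 0 \<and> (\<forall>v\<in>icone c J. \<exists>l. (\<forall>i\<in>J. 0 \<le> l i) \<and> v = (\<Sum>i\<in>J. l i *\<^sub>R c i) \<and> sum l J \<le> \<kappa> * norm v)" by blast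
  qed
  from bchoice[OF this] obtain kf where kf: "\<forall>J\<in>Pow I. kf J \<ge> 0 \<and> (\<forall>v\<in>icone c J. \<exists>l. (\<forall>i\<in>J. 0 \<le> l i) \<and> v = (\<Sum>i\<in>J. l i *\<^sub>R c i) \<and> sum l J \<le> kf J * norm v)" by blast
  define \<tau> where "\<tau> = sum kf (Pow I)"
  have t0: "\<tau> \<ge> 0" unfolding \<tau>_def using kf by (intro sum_nonneg) blast
  have tk: "kf J \<le> \<tau>" if "J \<in> Pow I" for J
    unfolding \<tau>_def using fin that kf by (intro member_le_sum) auto
  have clS: "closed S" unfolding S by (rule poly_closed)
  have cvS: "convex S" unfolding S by (rule poly_convex)
  show ?thesis
  proof (intro exI[of _ \<tau>] conjI allI impI)
    show "0 \<le> \<tau>" by (rule t0)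
    fix z s assume s0: "0 \<le> (s::real)" and zs: "\<forall>k\<in>I. c k \<bullet> z \<le> e k + s"
    define z' where "z' = closest_point S z"
    have z'S: "z' \<in> S" unfolding z'_def using closest_point_in_set[OF clS ne] .
    have nc: "\<forall>x. (\<forall>k\<in>I. c k \<bullet> x \<le> e k) \<longrightarrow> (z - z') \<bullet> (x - z') \<le> 0"
      using closest_point_dot[OF cvS clS] unfolding z'_def S by blast
    define A where "A = {k\<in>I. c k \<bullet> z' = e k}"
    have AI: "A \<in> Pow I" unfolding A_def by blast
    have "z - z' \<in> icone c A" unfolding A_def
      by (rule normal_cone_poly[OF fin _ nc]) (use z'S S in blast)
    then obtain l where l: "\<forall>i\<in>A. 0 \<le> l i" "z - z' = (\<Sum>i\<in>A. l i *\<^sub>R c i)" "sum l A \<le> kf A * norm (z - z')"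
      using kf AI by blast
    have "(norm (z - z'))^2 = (z - z') \<bullet> (z - z')" by (simp add: power2_norm_eq_inner)
    also have "\<dots> = (\<Sum>i\<in>A. l i * (c i \<bullet> (z - z')))" by (subst (1) l(2)) (simp add: inner_sum_left)
    also have "\<dots> = (\<Sum>i\<in>A. l i * (c i \<bullet> z - e i))"
      by (rule sum.cong) (auto simp: A_def inner_diff_right)
    also have "\<dots> \<le> (\<Sum>i\<in>A. l i * s)"
    proof (rule sum_mono)
      fix i assume iA: "i \<in> A"
      hence "c i \<bullet> z - e i \<le> s" using zs unfolding A_def by force
      thus "l i * (c i \<bullet> z - e i) \<le> l i * s" using l(1) iA by (simp add: mult_left_mono)
    qed
    also have "\<dots> = s * sum l A" by (simp add: sum_distrib_left mult.commute)
    also have "\<dots> \<le> s * (\<tau> * norm (z - z'))"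
    proof -
      have "sum l A \<le> \<tau> * norm (z - z')"
        using l(3) tk[OF AI] by (meson mult_right_mono norm_ge_zero order_trans)
      thus ?thesis using s0 by (simp add: mult_left_mono)
    qed
    finally have ineq: "(norm (z - z'))^2 \<le> (\<tau> * s) * norm (z - z')" by (simp add: algebra_simps)
    have "norm (z - z') \<le> \<tau> * s"
    proof (cases "norm (z - z') = 0")
      case True then show ?thesis using t0 s0 by simp
    next
      case False
      hence "norm (z - z') > 0" by simp
      thus ?thesis using ineq by (simp add: power2_eq_square)
    qed
    then show "\<exists>z'\<in>S. norm (z - z') \<le> \<tau> * s" using z'S by blast
  qed
qed

lemma infeasible_residual:
  fixes c :: "'k \<Rightarrow> 'a::euclidean_space"
  assumes fin: "finite I" and em: "\<forall>z. \<not> (\<forall>k\<in>I. c k \<bullet> z \<le> e k)"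
  shows "\<exists>\<delta>>0. \<forall>z s. (\<forall>k\<in>I. c k \<bullet> z \<le> e k + s) \<longrightarrow> \<delta> \<le> s"
proof -
  define cc :: "'k option \<Rightarrow> 'a \<times> real" where "cc g = (case g of None \<Rightarrow> (0, 1) | Some k \<Rightarrow> (c k, e k))" for g
  define I' where "I' = insert None (Some ` I)"
  have finI': "finite I'" unfolding I'_def using fin by simp
  have mem: "(0, -1) \<in> icone cc I'"
  proof (rule ccontr)
    assume "(0, -1) \<notin> icone cc I'"
    from sep_icone[OF finI' this] obtain u where u: "u \<bullet> (0, -1) < 0" "\<forall>k\<in>I'. u \<bullet> cc k \<ge> 0" by blast
    obtain uv ut where uu: "u = (uv, ut)" by (cases u)
    have ut: "ut > 0" using u(1) uu by simp
    have "\<forall>k\<in>I. c k \<bullet> (- (1/ut) *\<^sub>R uv) \<le> e k"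
    proof
      fix k assume "k \<in> I"
      hence "u \<bullet> cc (Some k) \<ge> 0" using u(2) unfolding I'_def by blast
      hence "uv \<bullet> c k + ut * e k \<ge> 0" using uu by (simp add: cc_def inner_commute)
      hence "- (uv \<bullet> c k) \<le> e k * ut" by (simp add: mult.commute)
      hence "(- (uv \<bullet> c k)) / ut \<le> e k" using ut by (simp add: field_simps)
      moreover have "c k \<bullet> (- (1/ut) *\<^sub>R uv) = (- (uv \<bullet> c k)) / ut" by (simp add: inner_commute)
      ultimately show "c k \<bullet> (- (1/ut) *\<^sub>R uv) \<le> e k" by (simp add: inner_commute)
    qed
    thus False using em by blast
  qed
  then obtain l where l: "\<forall>i\<in>I'. 0 \<le> l i" "(0, -1) = (\<Sum>i\<in>I'. l i *\<^sub>R cc i)" unfolding icone_def by blast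
  define m where "m k = l (Some k)" for k
  have split: "(\<Sum>i\<in>I'. l i *\<^sub>R cc i) = l None *\<^sub>R (0,1) + (\<Sum>k\<in>I. m k *\<^sub>R (c k, e k))"
    unfolding I'_def using fin by (simp add: sum.reindex cc_def m_def)
  have e1: "(\<Sum>k\<in>I. m k *\<^sub>R c k) = 0"
    using arg_cong[OF l(2), of fst] split by (simp add: fst_sum)
  have e2: "-1 = l None + (\<Sum>k\<in>I. m k * e k)"
    using arg_cong[OF l(2), of snd] split by (simp add: snd_sum)
  have m0: "\<forall>k\<in>I. m k \<ge> 0" using l(1) unfolding I'_def m_def by blast
  have lN: "l None \<ge> 0" using l(1) unfolding I'_def by blast
  have me: "(\<Sum>k\<in>I. m k * e k) \<le> -1" using e2 lN by linarith
  have key: "1 \<le> s * sum m I" if zs: "\<forall>k\<in>I. c k \<bullet> z \<le> e k + s" for z s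
  proof -
    have "0 = (\<Sum>k\<in>I. m k *\<^sub>R c k) \<bullet> z" using e1 by simp
    also have "\<dots> = (\<Sum>k\<in>I. m k * (c k \<bullet> z))" by (simp add: inner_sum_left)
    also have "\<dots> \<le> (\<Sum>k\<in>I. m k * (e k + s))" using m0 zs by (intro sum_mono mult_left_mono) auto
    also have "\<dots> = (\<Sum>k\<in>I. m k * e k) + s * sum m I"
      by (simp add: algebra_simps sum.distrib sum_distrib_left)
    finally show ?thesis using me by linarith
  qed
  have sm0: "sum m I \<ge> 0" using m0 by (simp add: sum_nonneg)
  have smp: "sum m I > 0"
  proof (rule ccontr)
    assume "\<not> sum m I > 0"
    hence z: "sum m I = 0" using sm0 by simp
    hence "\<forall>k\<in>I. m k = 0" using sum_nonneg_eq_0_iff[OF fin] m0 by blast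
    hence "(\<Sum>k\<in>I. m k * e k) = 0" by simp
    thus False using me by simp
  qed
  show ?thesis
  proof (intro exI[of _ "1 / sum m I"] conjI allI impI)
    show "0 < 1 / sum m I" using smp by simp
    fix z s assume "\<forall>k\<in>I. c k \<bullet> z \<le> e k + s"
    from key[OF this] show "1 / sum m I \<le> s" using smp by (simp add: divide_le_eq mult.commute)
  qed
qed

lemma mat_vec_scal: "(mat s :: real^'n^'n) *v x = s *\<^sub>R x"
proof -
  have "((mat s :: real^'n^'n) *v x) $ i = s * x $ i" for i
  proof -
    have "((mat s :: real^'n^'n) *v x) $ i = (\<Sum>j\<in>UNIV. (if i = j then s else 0) * x $ j)"
      by (simp add: matrix_vector_mult_def mat_def)
    also have "\<dots> = (\<Sum>j\<in>UNIV. if i = j then s * x $ j else 0)" by (rule sum.cong) auto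
    also have "\<dots> = s * x $ i" by simp
    finally show ?thesis .
  qed
  thus ?thesis by (simp add: vec_eq_iff)
qed

lemma sym_dot:
  fixes Q :: "real^'n^'n"
  assumes "transpose Q = Q"
  shows "(Q *v x) \<bullet> y = x \<bullet> (Q *v y)"
  by (metis assms dot_lmul_matrix vector_transpose_matrix)

lemma quad_add:
  fixes Q :: "real^'n^'n"
  assumes sym: "transpose Q = Q"
  shows "(x + y) \<bullet> (Q *v (x + y)) = x \<bullet> (Q *v x) + 2 * (y \<bullet> (Q *v x)) + y \<bullet> (Q *v y)"
proof -
  have "x \<bullet> (Q *v y) = y \<bullet> (Q *v x)" using sym_dot[OF sym, of y x] by (simp add: inner_commute)
  thus ?thesis by (simp add: matrix_vector_right_distrib inner_add_left inner_add_right)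
qed

lemma quad_scale:
  fixes Q :: "real^'n^'n"
  shows "(t *\<^sub>R x) \<bullet> (Q *v (t *\<^sub>R x)) = t^2 * (x \<bullet> (Q *v x))"
  by (simp add: matrix_vector_mult_scaleR power2_eq_square)

lemma rayleigh:
  fixes Q :: "real^'n^'n"
  assumes sym: "transpose Q = Q"
  shows "\<exists>m v0. v0 \<noteq> 0 \<and> Q *v v0 = m *\<^sub>R v0 \<and> (\<forall>u. u \<bullet> (Q *v u) \<le> m * (norm u)^2)"
proof -
  define f where "f u = u \<bullet> (Q *v u)" for u :: "real^'n"
  have cf: "continuous_on (sphere 0 1) f" unfolding f_def
    by (intro continuous_intros linear_continuous_on bounded_linear_intros) simp
  have ne: "sphere (0::real^'n) 1 \<noteq> {}"
  proof -
    obtain b :: "real^'n" where "b \<in> Basis" using nonempty_Basis by blast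
    hence "b \<in> sphere 0 1" by simp
    thus ?thesis by blast
  qed
  obtain v0 where v0: "v0 \<in> sphere 0 1" "\<forall>y\<in>sphere 0 1. f y \<le> f v0"
    using continuous_attains_sup[OF compact_sphere ne cf] by blast
  define m where "m = f v0"
  have nv0: "norm v0 = 1" using v0 by simp
  have bound: "f u \<le> m * (norm u)^2" for u
  proof (cases "u = 0")
    case True then show ?thesis by (simp add: f_def)
  next
    case False
    define u' where "u' = (1 / norm u) *\<^sub>R u"
    have "u' \<in> sphere 0 1" unfolding u'_def using False by simp
    hence "f u' \<le> m" using v0 unfolding m_def by blast
    moreover have "u = norm u *\<^sub>R u'" unfolding u'_def using False by simp
    hence "f u = (norm u)^2 * f u'" unfolding f_def by (metis quad_scale)
    ultimately show ?thesis by (metis mult.commute mult_right_mono zero_le_power2)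
  qed
  define r where "r = Q *v v0 - m *\<^sub>R v0"
  have rv0: "r \<bullet> (Q *v v0) - m * (r \<bullet> v0) = (norm r)^2"
    unfolding r_def by (simp add: power2_norm_eq_inner inner_diff_left inner_diff_right algebra_simps)
  have r0: "r = 0"
  proof (rule ccontr)
    assume rn: "r \<noteq> 0"
    define K where "K = f r - m * (norm r)^2"
    define t where "t = (norm r)^2 / (\<bar>K\<bar> + 1)"
    have nr: "(norm r)^2 > 0" using rn by simp
    have t0: "t > 0" unfolding t_def using nr by (simp add: add_nonneg_pos)
    have "f (v0 + t *\<^sub>R r) \<le> m * (norm (v0 + t *\<^sub>R r))^2" by (rule bound)
    moreover have "f (v0 + t *\<^sub>R r) = m + 2 * t * (r \<bullet> (Q *v v0)) + t^2 * f r"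
      unfolding f_def using quad_add[OF sym, of v0 "t *\<^sub>R r"] quad_scale[of t r Q]
      by (simp add: m_def f_def)
    moreover have "(norm (v0 + t *\<^sub>R r))^2 = 1 + 2 * t * (r \<bullet> v0) + t^2 * (norm r)^2"
    proof -
      have vv: "v0 \<bullet> v0 = 1" using nv0 by (metis power2_norm_eq_inner power_one)
      have rr: "r \<bullet> r = (norm r)^2" by (simp add: power2_norm_eq_inner)
      have "(norm (v0 + t *\<^sub>R r))^2 = (v0 + t *\<^sub>R r) \<bullet> (v0 + t *\<^sub>R r)" by (simp add: power2_norm_eq_inner)
      also have "\<dots> = v0 \<bullet> v0 + 2 * t * (r \<bullet> v0) + t^2 * (r \<bullet> r)"
        by (simp add: inner_add_left inner_add_right inner_commute power2_eq_square algebra_simps)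
      finally show ?thesis using vv rr by simp
    qed
    ultimately have "m + 2 * t * (r \<bullet> (Q *v v0)) + t^2 * f r \<le> m * (1 + 2 * t * (r \<bullet> v0) + t^2 * (norm r)^2)"
      by simp
    hence "2 * t * (r \<bullet> (Q *v v0) - m * (r \<bullet> v0)) + t^2 * K \<le> 0"
      unfolding K_def by (simp add: algebra_simps)
    hence "2 * t * (norm r)^2 + t^2 * K \<le> 0" using rv0 by simp
    hence "t * (2 * (norm r)^2 + t * K) \<le> 0" by (simp add: algebra_simps power2_eq_square)
    hence a: "2 * (norm r)^2 + t * K \<le> 0" using t0 by (simp add: mult_le_0_iff)
    have "t * \<bar>K\<bar> < (norm r)^2"
    proof -
      have "t * (\<bar>K\<bar> + 1) = (norm r)^2" unfolding t_def by simp
      thus ?thesis using t0 by (simp add: algebra_simps)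
    qed
    moreover have "- (t * K) \<le> t * \<bar>K\<bar>" using t0 by (simp add: abs_if mult_less_0_iff)
    ultimately show False using a nr by linarith
  qed
  show ?thesis
  proof (intro exI[of _ m] exI[of _ v0] conjI allI)
    show "v0 \<noteq> 0" using nv0 by auto
    show "Q *v v0 = m *\<^sub>R v0" using r0 unfolding r_def by simp
    show "u \<bullet> (Q *v u) \<le> m * (norm u)^2" for u using bound[of u] unfolding f_def .
  qed
qed

lemma eig_finite:
  fixes Q :: "real^'n^'n"
  assumes sym: "transpose Q = Q"
  shows "finite {l. \<exists>v. v \<noteq> 0 \<and> Q *v v = l *\<^sub>R v}"
proof -
  define E where "E = {l. \<exists>v::real^'n. v \<noteq> 0 \<and> Q *v v = l *\<^sub>R v}"
  define ev where "ev l = (SOME v::real^'n. v \<noteq> 0 \<and> Q *v v = l *\<^sub>R v)" for l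
  have evp: "ev l \<noteq> 0 \<and> Q *v ev l = l *\<^sub>R ev l" if "l \<in> E" for l
    using that unfolding E_def ev_def by (metis (mono_tags, lifting) mem_Collect_eq someI_ex)
  have orth: "ev l \<bullet> ev l' = 0" if "l \<in> E" "l' \<in> E" "l \<noteq> l'" for l l'
  proof -
    have "(Q *v ev l) \<bullet> ev l' = ev l \<bullet> (Q *v ev l')" by (rule sym_dot[OF sym])
    hence "l * (ev l \<bullet> ev l') = l' * (ev l \<bullet> ev l')" using evp[OF that(1)] evp[OF that(2)] by simp
    hence "(l - l') * (ev l \<bullet> ev l') = 0" by (simp add: algebra_simps)
    thus ?thesis using that(3) by simp
  qed
  have inj: "inj_on ev E"
  proof
    fix l l' assume "l \<in> E" "l' \<in> E" "ev l = ev l'"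
    hence "l *\<^sub>R ev l = l' *\<^sub>R ev l" using evp by metis
    thus "l = l'" using evp[OF \<open>l \<in> E\<close>] by (simp add: scaleR_cancel_right)
  qed
  have "pairwise orthogonal (ev ` E)"
    unfolding pairwise_def orthogonal_def using orth by fastforce
  moreover have "0 \<notin> ev ` E" using evp by fastforce
  ultimately have "independent (ev ` E)" by (rule pairwise_orthogonal_independent)
  hence "finite (ev ` E)" using independent_bound by blast
  hence "finite E" using finite_imageD inj by blast
  thus ?thesis unfolding E_def .
qed

lemma quad_le_lmax:
  fixes Q :: "real^'n^'n"
  assumes sym: "transpose Q = Q"
  shows "u \<bullet> (Q *v u) \<le> lambda_max Q * (norm u)^2"
proof -
  obtain m v0 where mv: "v0 \<noteq> 0" "Q *v v0 = m *\<^sub>R v0" "\<forall>u. u \<bullet> (Q *v u) \<le> m * (norm u)^2"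
    using rayleigh[OF sym] by blast
  have "m \<le> lambda_max Q" unfolding lambda_max_def
    using eig_finite[OF sym] mv by (intro Max_ge) auto
  hence "m * (norm u)^2 \<le> lambda_max Q * (norm u)^2" by (simp add: mult_right_mono)
  thus ?thesis using mv(3) by (meson order_trans)
qed

lemma norm_add_sq: "(norm (y + t *\<^sub>R w))^2 = (norm y)^2 + 2 * t * (y \<bullet> w) + t^2 * (norm w)^2"
proof -
  have "(norm (y + t *\<^sub>R w))^2 = (y + t *\<^sub>R w) \<bullet> (y + t *\<^sub>R w)" by (simp add: power2_norm_eq_inner)
  also have "\<dots> = y \<bullet> y + 2 * t * (y \<bullet> w) + t^2 * (w \<bullet> w)"
    by (simp add: inner_add_left inner_add_right inner_commute power2_eq_square algebra_simps)
  finally show ?thesis by (simp add: power2_norm_eq_inner)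
qed

lemma phi_expand:
  fixes Q :: "real^'n^'n"
  assumes sym: "transpose Q = Q"
  shows "phiQ Q q z' = phiQ Q q z + (Q *v z + q) \<bullet> (z' - z) + (1/2) * ((z' - z) \<bullet> (Q *v (z' - z)))"
proof -
  have "z' = z + (z' - z)" by simp
  have e: "z' \<bullet> (Q *v z') = z \<bullet> (Q *v z) + 2 * ((z' - z) \<bullet> (Q *v z)) + (z' - z) \<bullet> (Q *v (z' - z))"
    using quad_add[OF sym, of z "z' - z"] by simp
  have "phiQ Q q z' = (1/2) * (z' \<bullet> (Q *v z')) + q \<bullet> z'" unfolding phiQ_def by (simp add: inner_commute)
  also have "\<dots> = (1/2) * (z \<bullet> (Q *v z)) + q \<bullet> z + ((z' - z) \<bullet> (Q *v z) + q \<bullet> (z' - z)) + (1/2) * ((z' - z) \<bullet> (Q *v (z' - z)))"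
    unfolding e by (simp add: algebra_simps inner_diff_right)
  also have "\<dots> = phiQ Q q z + (Q *v z + q) \<bullet> (z' - z) + (1/2) * ((z' - z) \<bullet> (Q *v (z' - z)))"
  proof -
    have "(z' - z) \<bullet> (Q *v z) + q \<bullet> (z' - z) = (Q *v z + q) \<bullet> (z' - z)"
      by (metis inner_add_left inner_commute)
    thus ?thesis unfolding phiQ_def by (simp add: inner_commute)
  qed
  finally show ?thesis .
qed

lemma feas_seg:
  assumes "y \<in> feas a b p" "y + l0 *\<^sub>R d \<in> feas a b p" "0 \<le> t" "t \<le> 1"
  shows "y + (t * l0) *\<^sub>R d \<in> feas a b p"
  unfolding feas_def
proof (intro CollectI allI impI)
  fix i assume ip: "i < p"
  have h1: "a i \<bullet> y \<le> b i" and h2: "a i \<bullet> y + l0 * (a i \<bullet> d) \<le> b i"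
    using assms(1,2) ip unfolding feas_def by (auto simp: inner_add_right)
  have "a i \<bullet> (y + (t * l0) *\<^sub>R d) = (1 - t) * (a i \<bullet> y) + t * (a i \<bullet> y + l0 * (a i \<bullet> d))"
    by (simp add: inner_add_right algebra_simps)
  also have "\<dots> \<le> (1 - t) * b i + t * b i"
    using h1 h2 assms(3,4) by (intro add_mono mult_left_mono) auto
  finally show "a i \<bullet> (y + (t * l0) *\<^sub>R d) \<le> b i" by (simp add: algebra_simps)
qed

lemma step_props:
  assumes st: "bdca_step Q q a b p \<sigma> \<alpha> \<beta> x x'" and beta: "0 < \<beta>" "\<beta> < 1"
  shows "\<exists>y lam. y \<in> feas a b p \<and>
        (\<forall>z\<in>feas a b p. dc_g \<sigma> q y - ((mat \<sigma> - Q) *v x) \<bullet> y \<le> dc_g \<sigma> q z - ((mat \<sigma> - Q) *v x) \<bullet> z) \<and>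
        y - x \<noteq> 0 \<and> lam \<ge> 0 \<and> x' = y + lam *\<^sub>R (y - x) \<and> x' \<in> feas a b p \<and>
        phiQ Q q x' \<le> phiQ Q q y - \<alpha> * lam^2 * (norm (y - x))^2"
proof -
  obtain y where y: "y \<in> feas a b p"
    "\<forall>z\<in>feas a b p. dc_g \<sigma> q y - ((mat \<sigma> - Q) *v x) \<bullet> y \<le> dc_g \<sigma> q z - ((mat \<sigma> - Q) *v x) \<bullet> z"
    "y - x \<noteq> 0"
    and br: "if active a b p y \<subseteq> active a b p x then
           (\<exists>lam_bar lam0 j. lam_bar \<ge> 0 \<and> 0 \<le> lam0 \<and> lam0 \<le> lam_bar \<and>
              y + lam0 *\<^sub>R (y - x) \<in> feas a b p \<and>
              (\<forall>i<j. phiQ Q q (y + (\<beta>^i * lam0) *\<^sub>R (y - x)) >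
                      phiQ Q q y - \<alpha> * (\<beta>^i * lam0)^2 * (norm (y - x))^2) \<and>
              phiQ Q q (y + (\<beta>^j * lam0) *\<^sub>R (y - x)) \<le>
                      phiQ Q q y - \<alpha> * (\<beta>^j * lam0)^2 * (norm (y - x))^2 \<and>
              x' = y + (\<beta>^j * lam0) *\<^sub>R (y - x))
         else x' = y"
    using st unfolding bdca_step_def by blast
  show ?thesis
  proof (cases "active a b p y \<subseteq> active a b p x")
    case True
    then obtain lam0 j where l: "0 \<le> lam0" "y + lam0 *\<^sub>R (y - x) \<in> feas a b p"
       "phiQ Q q (y + (\<beta>^j * lam0) *\<^sub>R (y - x)) \<le> phiQ Q q y - \<alpha> * (\<beta>^j * lam0)^2 * (norm (y - x))^2"
       "x' = y + (\<beta>^j * lam0) *\<^sub>R (y - x)"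
      using br by auto
    have bj: "0 \<le> \<beta>^j" "\<beta>^j \<le> 1" using beta by (auto simp: power_le_one)
    have "x' \<in> feas a b p" using feas_seg[OF y(1) l(2) bj] l(4) by simp
    then show ?thesis using y l bj
      by (intro exI[of _ y] exI[of _ "\<beta>^j * lam0"]) auto
  next
    case False
    hence "x' = y" using br by simp
    then show ?thesis using y by (intro exI[of _ y] exI[of _ 0]) auto
  qed
qed

lemma Mvec: "(mat \<sigma> - Q) *v x = \<sigma> *\<^sub>R x - Q *v (x::real^'n)"
  by (simp add: matrix_vector_mult_diff_rdistrib mat_vec_scal)

lemma first_order:
  fixes Q :: "real^'n^'n"
  assumes yF: "y \<in> feas a b p"
    and ymin: "\<forall>z\<in>feas a b p. dc_g \<sigma> q y - ((mat \<sigma> - Q) *v x) \<bullet> y \<le> dc_g \<sigma> q z - ((mat \<sigma> - Q) *v x) \<bullet> z"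
    and sig: "\<sigma> > 0" and zF: "z \<in> feas a b p"
  shows "(\<sigma> *\<^sub>R y + q - (mat \<sigma> - Q) *v x) \<bullet> (z - y) \<ge> 0"
proof (rule ccontr)
  define g where "g = \<sigma> *\<^sub>R y + q - (mat \<sigma> - Q) *v x"
  define w where "w = z - y"
  define G where "G v = dc_g \<sigma> q v - ((mat \<sigma> - Q) *v x) \<bullet> v" for v
  assume "\<not> ?thesis"
  hence gw: "g \<bullet> w < 0" unfolding g_def w_def by simp
  have Gexp: "G (y + t *\<^sub>R w) = G y + t * (g \<bullet> w) + t^2 * (\<sigma>/2) * (norm w)^2" for t
  proof -
    have "(norm (y + t *\<^sub>R w))^2 = (norm y)^2 + 2 * t * (y \<bullet> w) + t^2 * (norm w)^2"
      by (rule norm_add_sq)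
    thus ?thesis unfolding G_def dc_g_def g_def
      by (simp add: inner_add_left inner_add_right inner_diff_left algebra_simps)
  qed
  define t where "t = min 1 (- (g \<bullet> w) / (\<sigma> * (norm w)^2 + 1))"
  have den: "\<sigma> * (norm w)^2 + 1 > 0" using sig by (simp add: add_nonneg_pos)
  have t0: "t > 0" unfolding t_def using gw den by (simp add: divide_neg_pos)
  have t1: "t \<le> 1" unfolding t_def by simp
  have t2: "t * (\<sigma> * (norm w)^2 + 1) \<le> - (g \<bullet> w)"
  proof -
    have "t \<le> - (g \<bullet> w) / (\<sigma> * (norm w)^2 + 1)" unfolding t_def by simp
    hence "t * (\<sigma> * (norm w)^2 + 1) \<le> (- (g \<bullet> w) / (\<sigma> * (norm w)^2 + 1)) * (\<sigma> * (norm w)^2 + 1)"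
      using den by (intro mult_right_mono) auto
    also have "\<dots> = - (g \<bullet> w)" using den by simp
    finally show ?thesis .
  qed
  have "y + (t * 1) *\<^sub>R w \<in> feas a b p"
    using feas_seg[OF yF _ less_imp_le[OF t0] t1, of 1 w] zF unfolding w_def by simp
  hence "G y \<le> G (y + t *\<^sub>R w)" using ymin unfolding G_def by simp
  hence le: "0 \<le> t * (g \<bullet> w) + t^2 * (\<sigma>/2) * (norm w)^2" using Gexp[of t] by simp
  have "t^2 * (\<sigma>/2) * (norm w)^2 \<le> t * (t * (\<sigma> * (norm w)^2 + 1)) / 2"
    using t0 by (simp add: power2_eq_square algebra_simps)
  also have "\<dots> \<le> t * (- (g \<bullet> w)) / 2"
    using mult_left_mono[OF t2, of t] t0 by (simp add: divide_right_mono)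
  finally have "t * (g \<bullet> w) + t^2 * (\<sigma>/2) * (norm w)^2 \<le> t * (g \<bullet> w) / 2" by simp
  moreover have "t * (g \<bullet> w) < 0" using t0 gw by (simp add: mult_pos_neg)
  ultimately show False using le by simp
qed

lemma descent:
  fixes Q :: "real^'n^'n"
  assumes sym: "transpose Q = Q" and sig: "\<sigma> > max 0 (lambda_max Q)"
    and xF: "x \<in> feas a b p" and yF: "y \<in> feas a b p"
    and ymin: "\<forall>z\<in>feas a b p. dc_g \<sigma> q y - ((mat \<sigma> - Q) *v x) \<bullet> y \<le> dc_g \<sigma> q z - ((mat \<sigma> - Q) *v x) \<bullet> z"
  shows "phiQ Q q y \<le> phiQ Q q x - (\<sigma>/2) * (norm (y - x))^2"
proof -
  define d where "d = y - x"
  have s0: "\<sigma> > 0" using sig by simp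
  have fo: "(\<sigma> *\<^sub>R y + q - (mat \<sigma> - Q) *v x) \<bullet> (x - y) \<ge> 0"
    by (rule first_order[OF yF ymin s0 xF])
  have "\<sigma> *\<^sub>R y + q - (mat \<sigma> - Q) *v x = \<sigma> *\<^sub>R d + (Q *v x + q)"
    unfolding d_def Mvec by (simp add: algebra_simps)
  hence "(\<sigma> *\<^sub>R d + (Q *v x + q)) \<bullet> d \<le> 0" using fo unfolding d_def
    by (metis inner_minus_right minus_diff_eq neg_0_le_iff_le)
  hence g1: "(Q *v x + q) \<bullet> d \<le> - \<sigma> * (norm d)^2"
    by (simp add: inner_add_left power2_norm_eq_inner)
  have "d \<bullet> (Q *v d) \<le> lambda_max Q * (norm d)^2" by (rule quad_le_lmax[OF sym])
  also have "\<dots> \<le> \<sigma> * (norm d)^2" using sig by (intro mult_right_mono) auto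
  finally have g2: "d \<bullet> (Q *v d) \<le> \<sigma> * (norm d)^2" .
  have "phiQ Q q y = phiQ Q q x + (Q *v x + q) \<bullet> d + (1/2) * (d \<bullet> (Q *v d))"
    unfolding d_def by (rule phi_expand[OF sym])
  thus ?thesis using g1 g2 unfolding d_def by simp
qed

definition KK :: "real^'n^'n \<Rightarrow> real^'n \<Rightarrow> (nat \<Rightarrow> real^'n) \<Rightarrow> (nat \<Rightarrow> real) \<Rightarrow> nat \<Rightarrow> nat set \<Rightarrow> (real^'n) set" where
  "KK Q q a b p J = {z \<in> feas a b p. (\<forall>i\<in>J. a i \<bullet> z = b i) \<and> - (Q *v z + q) \<in> icone a J}"

lemma KK_grad_zero:
  assumes "z \<in> KK Q q a b p J" "\<forall>i\<in>J. a i \<bullet> y = b i"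
  shows "(Q *v z + q) \<bullet> (y - z) = 0"
proof -
  obtain l where l: "- (Q *v z + q) = (\<Sum>i\<in>J. l i *\<^sub>R a i)" and zJ: "\<forall>i\<in>J. a i \<bullet> z = b i"
    using assms(1) unfolding KK_def icone_def by blast
  have "(- (Q *v z + q)) \<bullet> (y - z) = (\<Sum>i\<in>J. l i * (a i \<bullet> (y - z)))" unfolding l by (simp add: inner_sum_left)
  also have "\<dots> = 0" using zJ assms(2) by (intro sum.neutral) (simp add: inner_diff_right)
  finally show ?thesis by (metis inner_minus_left neg_equal_0_iff_equal)
qed

lemma KK_const:
  fixes Q :: "real^'n^'n"
  assumes sym: "transpose Q = Q" and z: "z \<in> KK Q q a b p J" and z': "z' \<in> KK Q q a b p J"
  shows "phiQ Q q z = phiQ Q q z'"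
proof -
  have zJ: "\<forall>i\<in>J. a i \<bullet> z = b i" and z'J: "\<forall>i\<in>J. a i \<bullet> z' = b i" using z z' unfolding KK_def by auto
  have e1: "phiQ Q q z' = phiQ Q q z + (1/2) * ((z' - z) \<bullet> (Q *v (z' - z)))"
    using phi_expand[OF sym, of q z' z] KK_grad_zero[OF z z'J] by simp
  have e2: "phiQ Q q z = phiQ Q q z' + (1/2) * ((z - z') \<bullet> (Q *v (z - z')))"
    using phi_expand[OF sym, of q z z'] KK_grad_zero[OF z' zJ] by simp
  have "(z - z') \<bullet> (Q *v (z - z')) = (z' - z) \<bullet> (Q *v (z' - z))"
    using quad_scale[of "-1" "z' - z" Q] by simp
  thus ?thesis using e1 e2 by simp
qed

lemma EB_J:
  fixes Q :: "real^'n^'n"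
  assumes sym: "transpose Q = Q" and J: "J \<subseteq> {..<p}"
  shows "\<exists>\<delta>>0. \<exists>\<tau>\<ge>0. \<forall>y r. y \<in> feas a b p \<longrightarrow> (\<forall>i\<in>J. a i \<bullet> y = b i) \<longrightarrow>
           - (Q *v y + q) - r \<in> icone a J \<longrightarrow> norm r < \<delta> \<longrightarrow>
           (\<exists>z\<in>KK Q q a b p J. norm (y - z) \<le> \<tau> * norm r)"
proof -
  have finJ: "finite J" using J finite_subset by blast
  obtain Hs where Hs: "finite Hs" "icone a J = \<Inter> Hs" "\<forall>h\<in>Hs. \<exists>c d. c \<noteq> 0 \<and> h = {x. c \<bullet> x \<le> d}"
    using icone_polyhedron[OF finJ, of a] unfolding polyhedron_def by blast
  have "\<forall>h\<in>Hs. \<exists>cd. h = {x. fst cd \<bullet> x \<le> snd cd}"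
  proof
    fix h assume "h \<in> Hs"
    then obtain c d where "h = {x. c \<bullet> x \<le> d}" using Hs(3) by blast
    thus "\<exists>cd. h = {x. fst cd \<bullet> x \<le> snd cd}" by (intro exI[of _ "(c,d)"]) simp
  qed
  from bchoice[OF this] obtain cd where cd: "\<forall>h\<in>Hs. h = {x. fst (cd h) \<bullet> x \<le> snd (cd h)}" by blast
  define g where "g h = fst (cd h)" for h
  define \<beta> where "\<beta> h = snd (cd h)" for h
  have hm: "v \<in> h \<longleftrightarrow> g h \<bullet> v \<le> \<beta> h" if "h \<in> Hs" for h v
    unfolding g_def \<beta>_def by (subst bspec[OF cd that]) simp
  have cm: "v \<in> icone a J \<longleftrightarrow> (\<forall>h\<in>Hs. g h \<bullet> v \<le> \<beta> h)" for v
    using hm Hs(2) by auto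
  define cs :: "nat + nat + (real^'n) set \<Rightarrow> real^'n" where
    "cs = case_sum a (case_sum (\<lambda>i. - a i) (\<lambda>h. - (Q *v g h)))"
  define es :: "nat + nat + (real^'n) set \<Rightarrow> real" where
    "es = case_sum b (case_sum (\<lambda>i. - b i) (\<lambda>h. \<beta> h + g h \<bullet> q))"
  define I where "I = Inl ` {..<p} \<union> Inr ` (Inl ` J \<union> Inr ` Hs)"
  have finI: "finite I" unfolding I_def using finJ Hs(1) by simp
  have Smem: "(\<forall>k\<in>I. cs k \<bullet> z \<le> es k + s) \<longleftrightarrow>
      (\<forall>i<p. a i \<bullet> z \<le> b i + s) \<and> (\<forall>i\<in>J. - (a i \<bullet> z) \<le> - b i + s) \<and>
      (\<forall>h\<in>Hs. - (g h \<bullet> (Q *v z)) \<le> \<beta> h + g h \<bullet> q + s)" for z s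
  proof -
    have qg: "(Q *v g h) \<bullet> z = g h \<bullet> (Q *v z)" for h using sym_dot[OF sym] .
    have sp: "(\<forall>k\<in>I. P k) \<longleftrightarrow> (\<forall>i. i < p \<longrightarrow> P (Inl i)) \<and> (\<forall>i\<in>J. P (Inr (Inl i))) \<and> (\<forall>h\<in>Hs. P (Inr (Inr h)))" for P
      unfolding I_def by blast
    show ?thesis unfolding sp by (simp add: cs_def es_def qg algebra_simps lessThan_iff)
  qed
  define S where "S = {z. \<forall>k\<in>I. cs k \<bullet> z \<le> es k}"
  have SK: "S = KK Q q a b p J"
  proof -
    have "z \<in> S \<longleftrightarrow> z \<in> KK Q q a b p J" for z
    proof -
      have c1: "(\<forall>h\<in>Hs. - (g h \<bullet> (Q *v z)) \<le> \<beta> h + g h \<bullet> q) \<longleftrightarrow> - (Q *v z + q) \<in> icone a J"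
        unfolding cm by (rule ball_cong[OF refl]) (simp add: inner_add_right inner_diff_right minus_add_distrib, linarith)
      have "z \<in> S \<longleftrightarrow> (\<forall>i<p. a i \<bullet> z \<le> b i) \<and> (\<forall>i\<in>J. - (a i \<bullet> z) \<le> - b i) \<and>
          (\<forall>h\<in>Hs. - (g h \<bullet> (Q *v z)) \<le> \<beta> h + g h \<bullet> q)"
        using Smem[of z 0] unfolding S_def by simp
      also have "\<dots> \<longleftrightarrow> z \<in> KK Q q a b p J"
        unfolding c1 KK_def feas_def using J by (auto intro: antisym)
      finally show ?thesis .
    qed
    thus ?thesis by blast
  qed
  define Gs where "Gs = (\<Sum>h\<in>Hs. norm (g h))"
  have Gs0: "Gs \<ge> 0" unfolding Gs_def by (simp add: sum_nonneg)
  have gle: "norm (g h) \<le> Gs" if "h \<in> Hs" for h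
    unfolding Gs_def using Hs(1) that by (intro member_le_sum) auto
  have resid: "\<forall>k\<in>I. cs k \<bullet> y \<le> es k + Gs * norm r"
    if y: "y \<in> feas a b p" "\<forall>i\<in>J. a i \<bullet> y = b i" "- (Q *v y + q) - r \<in> icone a J" for y r
  proof -
    have p1: "\<forall>i<p. a i \<bullet> y \<le> b i + Gs * norm r" using y(1) Gs0 unfolding feas_def
      by (auto intro: add_increasing2)
    have p2: "\<forall>i\<in>J. - (a i \<bullet> y) \<le> - b i + Gs * norm r" using y(2) Gs0 by simp
    have p3: "\<forall>h\<in>Hs. - (g h \<bullet> (Q *v y)) \<le> \<beta> h + g h \<bullet> q + Gs * norm r"
    proof
      fix h assume hH: "h \<in> Hs"
      have "g h \<bullet> (- (Q *v y + q) - r) \<le> \<beta> h" using y(3) cm hH by blast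
      hence "- (g h \<bullet> (Q *v y)) \<le> \<beta> h + g h \<bullet> q + g h \<bullet> r"
        by (simp add: inner_diff_right inner_add_right)
      moreover have "g h \<bullet> r \<le> Gs * norm r"
        using norm_cauchy_schwarz[of "g h" r] gle[OF hH] by (meson mult_right_mono norm_ge_zero order_trans)
      ultimately show "- (g h \<bullet> (Q *v y)) \<le> \<beta> h + g h \<bullet> q + Gs * norm r" by simp
    qed
    show ?thesis using Smem[of y "Gs * norm r"] p1 p2 p3 by blast
  qed
  show ?thesis
  proof (cases "S = {}")
    case False
    obtain \<tau>0 where t0: "\<tau>0 \<ge> 0" and hf: "\<forall>z s. 0 \<le> s \<longrightarrow> (\<forall>k\<in>I. cs k \<bullet> z \<le> es k + s) \<longrightarrow> (\<exists>z'\<in>S. norm (z - z') \<le> \<tau>0 * s)"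
      using hoffman[OF finI False S_def] by blast
    have main: "\<forall>y r. y \<in> feas a b p \<longrightarrow> (\<forall>i\<in>J. a i \<bullet> y = b i) \<longrightarrow>
           - (Q *v y + q) - r \<in> icone a J \<longrightarrow> norm r < 1 \<longrightarrow>
           (\<exists>z\<in>KK Q q a b p J. norm (y - z) \<le> (\<tau>0 * Gs) * norm r)"
    proof (intro allI impI)
      fix y r assume y: "y \<in> feas a b p" "\<forall>i\<in>J. a i \<bullet> y = b i" "- (Q *v y + q) - r \<in> icone a J"
      have "\<exists>z'\<in>S. norm (y - z') \<le> \<tau>0 * (Gs * norm r)"
        using hf resid[OF y] Gs0 by (simp add: zero_le_mult_iff)
      thus "\<exists>z\<in>KK Q q a b p J. norm (y - z) \<le> \<tau>0 * Gs * norm r" using SK by (simp add: mult.assoc)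
    qed
    have "(0::real) < 1" "0 \<le> \<tau>0 * Gs" using t0 Gs0 by auto
    thus ?thesis using main by blast
  next
    case True
    hence em: "\<forall>z. \<not> (\<forall>k\<in>I. cs k \<bullet> z \<le> es k)" unfolding S_def by blast
    obtain \<delta>0 where d0: "\<delta>0 > 0" and hf: "\<forall>z s. (\<forall>k\<in>I. cs k \<bullet> z \<le> es k + s) \<longrightarrow> \<delta>0 \<le> s"
      using infeasible_residual[OF finI em] by blast
    have main: "\<forall>y r. y \<in> feas a b p \<longrightarrow> (\<forall>i\<in>J. a i \<bullet> y = b i) \<longrightarrow>
           - (Q *v y + q) - r \<in> icone a J \<longrightarrow> norm r < \<delta>0 / (Gs + 1) \<longrightarrow>
           (\<exists>z\<in>KK Q q a b p J. norm (y - z) \<le> 0 * norm r)"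
    proof (intro allI impI)
      fix y r assume y: "y \<in> feas a b p" "\<forall>i\<in>J. a i \<bullet> y = b i" "- (Q *v y + q) - r \<in> icone a J"
        and rs: "norm r < \<delta>0 / (Gs + 1)"
      have "\<delta>0 \<le> Gs * norm r" using hf resid[OF y] by blast
      moreover have "Gs * norm r \<le> Gs * (\<delta>0 / (Gs + 1))" using rs Gs0 by (intro mult_left_mono) auto
      moreover have "Gs * (\<delta>0 / (Gs + 1)) < \<delta>0"
      proof -
        have "Gs * \<delta>0 < (Gs + 1) * \<delta>0" using d0 by simp
        thus ?thesis using Gs0 by (simp add: pos_divide_less_eq[symmetric] mult.commute)
      qed
      ultimately show "\<exists>z\<in>KK Q q a b p J. norm (y - z) \<le> 0 * norm r" by linarith
    qed
    have "0 < \<delta>0 / (Gs + 1)" using d0 Gs0 by simp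
    thus ?thesis using main by (intro exI[of _ "\<delta>0 / (Gs + 1)"]) auto
  qed
qed

lemma EB:
  fixes Q :: "real^'n^'n"
  assumes sym: "transpose Q = Q"
  shows "\<exists>\<delta>>0. \<exists>\<tau>\<ge>0. \<forall>J\<subseteq>{..<p}. \<forall>y r. y \<in> feas a b p \<longrightarrow> (\<forall>i\<in>J. a i \<bullet> y = b i) \<longrightarrow>
           - (Q *v y + q) - r \<in> icone a J \<longrightarrow> norm r < \<delta> \<longrightarrow>
           (\<exists>z\<in>KK Q q a b p J. norm (y - z) \<le> \<tau> * norm r)"
proof -
  define P where "P J dt \<longleftrightarrow> fst dt > 0 \<and> snd dt \<ge> 0 \<and> (\<forall>y r. y \<in> feas a b p \<longrightarrow> (\<forall>i\<in>J. a i \<bullet> y = b i) \<longrightarrow>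
           - (Q *v y + q) - r \<in> icone a J \<longrightarrow> norm r < fst dt \<longrightarrow>
           (\<exists>z\<in>KK Q q a b p J. norm (y - z) \<le> snd dt * norm r))" for J and dt :: "real \<times> real"
  have "\<forall>J\<in>Pow {..<p}. \<exists>dt. P J dt"
  proof
    fix J assume "J \<in> Pow {..<p}"
    then obtain \<delta> \<tau> where "\<delta> > 0" "\<tau> \<ge> 0" "\<forall>y r. y \<in> feas a b p \<longrightarrow> (\<forall>i\<in>J. a i \<bullet> y = b i) \<longrightarrow>
           - (Q *v y + q) - r \<in> icone a J \<longrightarrow> norm r < \<delta> \<longrightarrow>
           (\<exists>z\<in>KK Q q a b p J. norm (y - z) \<le> \<tau> * norm r)"
      using EB_J[OF sym, of J p a b q] by blast
    thus "\<exists>dt. P J dt" unfolding P_def by (intro exI[of _ "(\<delta>, \<tau>)"]) simp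
  qed
  from bchoice[OF this] obtain dt where dt: "\<forall>J\<in>Pow {..<p}. P J (dt J)" by blast
  define \<delta> where "\<delta> = Min ((\<lambda>J. fst (dt J)) ` Pow {..<p})"
  define \<tau> where "\<tau> = (\<Sum>J\<in>Pow {..<p}. snd (dt J))"
  have fin: "finite (Pow {..<p::nat})" by simp
  have d0: "\<delta> > 0" unfolding \<delta>_def
  proof (subst Min_gr_iff)
    show "finite ((\<lambda>J. fst (dt J)) ` Pow {..<p})" using fin by simp
    show "(\<lambda>J. fst (dt J)) ` Pow {..<p} \<noteq> {}" by blast
    show "\<forall>x\<in>(\<lambda>J. fst (dt J)) ` Pow {..<p}. 0 < x" using dt unfolding P_def by blast
  qed
  have dle: "\<delta> \<le> fst (dt J)" if "J \<in> Pow {..<p}" for J unfolding \<delta>_def using fin that by auto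
  have tle: "snd (dt J) \<le> \<tau>" if "J \<in> Pow {..<p}" for J
    unfolding \<tau>_def using fin that dt unfolding P_def by (intro member_le_sum) auto
  have t0: "\<tau> \<ge> 0" unfolding \<tau>_def using dt unfolding P_def by (intro sum_nonneg) blast
  have main: "\<forall>J\<subseteq>{..<p}. \<forall>y r. y \<in> feas a b p \<longrightarrow> (\<forall>i\<in>J. a i \<bullet> y = b i) \<longrightarrow>
           - (Q *v y + q) - r \<in> icone a J \<longrightarrow> norm r < \<delta> \<longrightarrow>
           (\<exists>z\<in>KK Q q a b p J. norm (y - z) \<le> \<tau> * norm r)"
  proof (intro allI impI)
    fix J y r assume JJ: "J \<subseteq> {..<p}" and y: "y \<in> feas a b p" "\<forall>i\<in>J. a i \<bullet> y = b i"
      "- (Q *v y + q) - r \<in> icone a J" "norm r < \<delta>"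
    have JP: "J \<in> Pow {..<p}" using JJ by simp
    have "norm r < fst (dt J)" using y(4) dle[OF JP] by simp
    then obtain z where "z \<in> KK Q q a b p J" "norm (y - z) \<le> snd (dt J) * norm r"
      using dt JP y unfolding P_def by blast
    moreover have "snd (dt J) * norm r \<le> \<tau> * norm r" using tle[OF JP] by (simp add: mult_right_mono)
    ultimately show "\<exists>z\<in>KK Q q a b p J. norm (y - z) \<le> \<tau> * norm r" by force
  qed
  show ?thesis using main d0 t0 by blast
qed

lemma KK_values_finite:
  fixes Q :: "real^'n^'n"
  assumes sym: "transpose Q = Q"
  shows "finite (phiQ Q q ` (\<Union>J\<in>Pow {..<p}. KK Q q a b p J))"
proof -
  have "phiQ Q q ` (\<Union>J\<in>Pow {..<p}. KK Q q a b p J) \<subseteq> (\<lambda>J. phiQ Q q (SOME z. z \<in> KK Q q a b p J)) ` Pow {..<p}"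
  proof
    fix v assume "v \<in> phiQ Q q ` (\<Union>J\<in>Pow {..<p}. KK Q q a b p J)"
    then obtain J z where Jz: "J \<in> Pow {..<p}" "z \<in> KK Q q a b p J" "v = phiQ Q q z" by blast
    have "(SOME z. z \<in> KK Q q a b p J) \<in> KK Q q a b p J" using Jz(2) by (rule someI)
    hence "v = phiQ Q q (SOME z. z \<in> KK Q q a b p J)" using KK_const[OF sym Jz(2)] Jz(3) by simp
    thus "v \<in> (\<lambda>J. phiQ Q q (SOME z. z \<in> KK Q q a b p J)) ` Pow {..<p}" using Jz(1) by blast
  qed
  thus ?thesis by (rule finite_subset) simp
qed

lemma geom_conv:
  fixes x :: "nat \<Rightarrow> 'a::banach"
  assumes st: "\<forall>j. norm (x (Suc j) - x j) \<le> A * \<theta>^j" and t0: "0 < \<theta>" and t1: "\<theta> < 1"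
  shows "\<exists>l. x \<longlonglongrightarrow> l \<and> (\<forall>j. norm (x j - l) \<le> A * \<theta>^j / (1 - \<theta>))"
proof -
  have A0: "A \<ge> 0"
  proof -
    have "0 \<le> norm (x (Suc 0) - x 0)" by simp
    also have "\<dots> \<le> A * \<theta>^0" using st by blast
    finally show ?thesis by simp
  qed
  have b: "norm (x (j + n) - x j) \<le> A * \<theta>^j * (\<Sum>i<n. \<theta>^i)" for j n
  proof (induction n)
    case 0 then show ?case by simp
  next
    case (Suc n)
    have "norm (x (j + Suc n) - x j) \<le> norm (x (Suc (j + n)) - x (j + n)) + norm (x (j + n) - x j)"
      using norm_triangle_ineq[of "x (Suc (j + n)) - x (j + n)" "x (j + n) - x j"] by simp
    also have "\<dots> \<le> A * \<theta>^(j + n) + A * \<theta>^j * (\<Sum>i<n. \<theta>^i)"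
      using st Suc.IH by (intro add_mono) auto
    also have "\<dots> = A * \<theta>^j * (\<Sum>i<Suc n. \<theta>^i)"
      by (simp add: power_add algebra_simps)
    finally show ?case .
  qed
  have b2: "norm (x m - x j) \<le> A * \<theta>^j / (1 - \<theta>)" if jm: "j \<le> m" for j m
  proof -
    obtain n where m: "m = j + n" using le_Suc_ex[OF jm] by blast
    have h1: "norm (x m - x j) \<le> A * \<theta>^j * (\<Sum>i<n. \<theta>^i)" unfolding m by (rule b)
    have gs: "(\<Sum>i<n. \<theta>^i) = (1 - \<theta>^n) / (1 - \<theta>)" using sum_gp_strict[of \<theta> n] t1 by simp
    have tn: "0 \<le> \<theta>^n" using t0 by simp
    have "(1 - \<theta>^n) / (1 - \<theta>) \<le> 1 / (1 - \<theta>)"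
      by (rule divide_right_mono) (use tn t1 in auto)
    hence h2: "(\<Sum>i<n. \<theta>^i) \<le> 1 / (1 - \<theta>)" unfolding gs .
    have h3: "0 \<le> A * \<theta>^j" using A0 t0 by simp
    have "A * \<theta>^j * (\<Sum>i<n. \<theta>^i) \<le> A * \<theta>^j * (1 / (1 - \<theta>))"
      by (rule mult_left_mono[OF h2 h3])
    also have "\<dots> = A * \<theta>^j / (1 - \<theta>)" by simp
    finally show ?thesis using h1 by linarith
  qed
  have "Cauchy x"
  proof (rule CauchyI)
    fix e :: real assume e: "0 < e"
    have "e * (1 - \<theta>) / (2 * A + 1) > 0" using e t1 A0 by (simp add: add_nonneg_pos)
    then obtain N where N: "\<theta>^N < e * (1 - \<theta>) / (2 * A + 1)" using real_arch_pow_inv t1 by blast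
    show "\<exists>M. \<forall>m\<ge>M. \<forall>n\<ge>M. norm (x m - x n) < e"
    proof (intro exI[of _ N] allI impI)
      fix m n assume mn: "N \<le> m" "N \<le> n"
      have "norm (x m - x n) \<le> norm (x m - x N) + norm (x n - x N)"
        using norm_triangle_ineq4[of "x m - x N" "x n - x N"] by simp
      also have "\<dots> \<le> 2 * A * \<theta>^N / (1 - \<theta>)" using b2[OF mn(1)] b2[OF mn(2)] by simp
      also have "\<dots> < e"
      proof -
        have "2 * A * \<theta>^N \<le> (2 * A + 1) * \<theta>^N" using t0 by simp
        also have "\<dots> < (2 * A + 1) * (e * (1 - \<theta>) / (2 * A + 1))"
          using N A0 by (intro mult_strict_left_mono) (auto simp: add_nonneg_pos)
        also have "\<dots> = e * (1 - \<theta>)" using A0 by (simp add: add_nonneg_pos)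
        finally show ?thesis using t1 by (simp add: pos_divide_less_eq)
      qed
      finally show "norm (x m - x n) < e" .
    qed
  qed
  hence "convergent x" by (simp add: Cauchy_convergent_iff)
  then obtain l where l: "x \<longlonglongrightarrow> l" unfolding convergent_def by blast
  have "norm (x j - l) \<le> A * \<theta>^j / (1 - \<theta>)" for j
  proof -
    have c1: "(\<lambda>m. norm (x m - x j)) \<longlonglongrightarrow> norm (l - x j)"
      using tendsto_norm[OF tendsto_diff[OF l tendsto_const]] .
    have c2: "\<forall>m\<ge>j. norm (x m - x j) \<le> A * \<theta>^j / (1 - \<theta>)" using b2 by blast
    have "norm (l - x j) \<le> A * \<theta>^j / (1 - \<theta>)" by (rule Lim_bounded[OF c1 c2])
    thus ?thesis by (simp add: norm_minus_commute)
  qed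
  thus ?thesis using l by blast
qed

lemma feas_eq: "feas a b p = {z. \<forall>k\<in>{..<p}. a k \<bullet> z \<le> b k}"
  unfolding feas_def by auto

lemma active_eq: "active a b p y = {k\<in>{..<p}. a k \<bullet> y = b k}"
  unfolding active_def by auto

lemma normal_y:
  fixes Q :: "real^'n^'n"
  assumes s0: "\<sigma> > 0" and yF: "y \<in> feas a b p"
    and ymin: "\<forall>z\<in>feas a b p. dc_g \<sigma> q y - ((mat \<sigma> - Q) *v x) \<bullet> y \<le> dc_g \<sigma> q z - ((mat \<sigma> - Q) *v x) \<bullet> z"
  shows "- (Q *v y + q) - (mat \<sigma> - Q) *v (y - x) \<in> icone a (active a b p y)"
proof -
  define w where "w = - (\<sigma> *\<^sub>R y + q - (mat \<sigma> - Q) *v x)"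
  have vi: "\<forall>z. (\<forall>k\<in>{..<p}. a k \<bullet> z \<le> b k) \<longrightarrow> w \<bullet> (z - y) \<le> 0"
  proof (intro allI impI)
    fix z assume "\<forall>k\<in>{..<p}. a k \<bullet> z \<le> b k"
    hence zF: "z \<in> feas a b p" unfolding feas_eq by blast
    have "w \<bullet> (z - y) = - ((\<sigma> *\<^sub>R y + q - (mat \<sigma> - Q) *v x) \<bullet> (z - y))"
      unfolding w_def by (rule inner_minus_left)
    thus "w \<bullet> (z - y) \<le> 0" using first_order[OF yF ymin s0 zF] by linarith
  qed
  have yF': "\<forall>k\<in>{..<p}. a k \<bullet> y \<le> b k" using yF unfolding feas_eq by blast
  have "w \<in> icone a (active a b p y)"
    unfolding active_eq by (rule normal_cone_poly[OF _ yF' vi]) simp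
  moreover have "w = - (Q *v y + q) - (mat \<sigma> - Q) *v (y - x)"
    unfolding w_def Mvec by (simp add: matrix_vector_mult_diff_distrib algebra_simps)
  ultimately show ?thesis by simp
qed

lemma kkt_of_vi:
  fixes Q :: "real^'n^'n"
  assumes lF: "l \<in> feas a b p" and vi: "\<forall>z\<in>feas a b p. (Q *v l + q) \<bullet> (z - l) \<ge> 0"
  shows "kkt Q q a b p l"
proof -
  define w where "w = - (Q *v l + q)"
  have vi': "\<forall>z. (\<forall>k\<in>{..<p}. a k \<bullet> z \<le> b k) \<longrightarrow> w \<bullet> (z - l) \<le> 0"
  proof (intro allI impI)
    fix z assume "\<forall>k\<in>{..<p}. a k \<bullet> z \<le> b k"
    hence "z \<in> feas a b p" unfolding feas_eq by blast
    hence "(Q *v l + q) \<bullet> (z - l) \<ge> 0" using vi by blast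
    moreover have "w \<bullet> (z - l) = - ((Q *v l + q) \<bullet> (z - l))" unfolding w_def by (rule inner_minus_left)
    ultimately show "w \<bullet> (z - l) \<le> 0" by linarith
  qed
  have lF': "\<forall>k\<in>{..<p}. a k \<bullet> l \<le> b k" using lF unfolding feas_eq by blast
  define A where "A = {k\<in>{..<p}. a k \<bullet> l = b k}"
  have "w \<in> icone a A" unfolding A_def by (rule normal_cone_poly[OF _ lF' vi']) simp
  then obtain m where m: "\<forall>i\<in>A. 0 \<le> m i" "w = (\<Sum>i\<in>A. m i *\<^sub>R a i)" unfolding icone_def by blast
  define \<mu> where "\<mu> i = (if i \<in> A then m i else 0)" for i
  have Ap: "A \<subseteq> {..<p}" unfolding A_def by blast
  have "(\<Sum>i<p. \<mu> i *\<^sub>R a i) = (\<Sum>i\<in>A. \<mu> i *\<^sub>R a i)"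
    by (rule sum.mono_neutral_right) (use Ap in \<open>auto simp: \<mu>_def\<close>)
  also have "\<dots> = w" unfolding m(2) by (rule sum.cong) (auto simp: \<mu>_def)
  finally have s: "(\<Sum>i<p. \<mu> i *\<^sub>R a i) = w" .
  show ?thesis unfolding kkt_def
  proof (intro exI[of _ \<mu>] conjI allI impI)
    fix i assume ip: "i < p"
    show "0 \<le> \<mu> i" using m(1) unfolding \<mu>_def by simp
    show "\<mu> i * (a i \<bullet> l - b i) = 0" unfolding \<mu>_def A_def by simp
    show "a i \<bullet> l \<le> b i" using lF' ip by simp
  next
    show "Q *v l + q + (\<Sum>i<p. \<mu> i *\<^sub>R a i) = 0" unfolding s w_def by simp
  qed
qed

theorem theorem4p3:
  fixes Q :: "real^'n^'n" and q :: "real^'n" and a :: "nat \<Rightarrow> real^'n" and b :: "nat \<Rightarrow> real"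
    and p :: nat and \<sigma> \<alpha> \<beta> :: real and x :: "nat \<Rightarrow> real^'n"
  assumes symQ: "transpose Q = Q"
    and sigma: "\<sigma> > max 0 (lambda_max Q)"
    and alpha: "\<alpha> > 0" and beta: "0 < \<beta>" "\<beta> < 1"
    and solvable: "\<exists>xs\<in>feas a b p. \<forall>z\<in>feas a b p. phiQ Q q xs \<le> phiQ Q q z"
    and x0: "x 0 \<in> feas a b p"
    and iter: "\<And>k. bdca_step Q q a b p \<sigma> \<alpha> \<beta> (x k) (x (Suc k))"
  shows "\<exists>xstar. kkt Q q a b p xstar \<and> x \<longlonglongrightarrow> xstar \<and>
           (\<exists>C>0. \<exists>\<mu>. 0 < \<mu> \<and> \<mu> < 1 \<and>
              (\<exists>K. \<forall>k\<ge>K. norm (x k - xstar) \<le> C * \<mu>^k))"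
proof -
  define M where "M = mat \<sigma> - Q"
  have s0: "\<sigma> > 0" using sigma by simp
  have ex: "\<forall>k. \<exists>y. \<exists>lam. y \<in> feas a b p \<and>
        (\<forall>z\<in>feas a b p. dc_g \<sigma> q y - (M *v x k) \<bullet> y \<le> dc_g \<sigma> q z - (M *v x k) \<bullet> z) \<and>
        y - x k \<noteq> 0 \<and> lam \<ge> 0 \<and> x (Suc k) = y + lam *\<^sub>R (y - x k) \<and> x (Suc k) \<in> feas a b p \<and>
        phiQ Q q (x (Suc k)) \<le> phiQ Q q y - \<alpha> * lam^2 * (norm (y - x k))^2"
    unfolding M_def using step_props[OF iter beta] by blast
  from choice[OF ex] obtain y where "\<forall>k. \<exists>lam. y k \<in> feas a b p \<and>
        (\<forall>z\<in>feas a b p. dc_g \<sigma> q (y k) - (M *v x k) \<bullet> y k \<le> dc_g \<sigma> q z - (M *v x k) \<bullet> z) \<and>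
        y k - x k \<noteq> 0 \<and> lam \<ge> 0 \<and> x (Suc k) = y k + lam *\<^sub>R (y k - x k) \<and> x (Suc k) \<in> feas a b p \<and>
        phiQ Q q (x (Suc k)) \<le> phiQ Q q (y k) - \<alpha> * lam^2 * (norm (y k - x k))^2" by blast
  from choice[OF this] obtain lam where yl: "\<forall>k. y k \<in> feas a b p \<and>
        (\<forall>z\<in>feas a b p. dc_g \<sigma> q (y k) - (M *v x k) \<bullet> y k \<le> dc_g \<sigma> q z - (M *v x k) \<bullet> z) \<and>
        y k - x k \<noteq> 0 \<and> lam k \<ge> 0 \<and> x (Suc k) = y k + lam k *\<^sub>R (y k - x k) \<and> x (Suc k) \<in> feas a b p \<and>
        phiQ Q q (x (Suc k)) \<le> phiQ Q q (y k) - \<alpha> * (lam k)^2 * (norm (y k - x k))^2" by blast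
  define d where "d k = y k - x k" for k
  have yF: "y k \<in> feas a b p" for k using yl by blast
  have ymin: "\<forall>z\<in>feas a b p. dc_g \<sigma> q (y k) - ((mat \<sigma> - Q) *v x k) \<bullet> y k \<le> dc_g \<sigma> q z - ((mat \<sigma> - Q) *v x k) \<bullet> z" for k
    using yl unfolding M_def by blast
  have l0: "lam k \<ge> 0" for k using yl by blast
  have xs: "x (Suc k) = y k + lam k *\<^sub>R d k" for k using yl unfolding d_def by blast
  have arm: "phiQ Q q (x (Suc k)) \<le> phiQ Q q (y k) - \<alpha> * (lam k)^2 * (norm (d k))^2" for k
    using yl unfolding d_def by blast
  have xF: "x k \<in> feas a b p" for k
  proof (cases k)
    case 0 then show ?thesis using x0 by simp
  next
    case (Suc j) then show ?thesis using yl by blast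
  qed
  have desc: "phiQ Q q (y k) \<le> phiQ Q q (x k) - (\<sigma>/2) * (norm (d k))^2" for k
    unfolding d_def by (rule descent[OF symQ sigma xF yF ymin])
  define f where "f k = phiQ Q q (x k)" for k
  have fdec: "f (Suc k) \<le> f k - (\<sigma>/2) * (norm (d k))^2 - \<alpha> * (lam k)^2 * (norm (d k))^2" for k
    using arm[of k] desc[of k] unfolding f_def by linarith
  have fy1: "f (Suc k) \<le> phiQ Q q (y k)" for k
  proof -
    have "0 \<le> \<alpha> * (lam k)^2 * (norm (d k))^2" using alpha by simp
    thus ?thesis using arm[of k] unfolding f_def by linarith
  qed
  have fy2: "phiQ Q q (y k) \<le> f k" for k
  proof -
    have "0 \<le> (\<sigma>/2) * (norm (d k))^2" using s0 by simp
    thus ?thesis using desc[of k] unfolding f_def by linarith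
  qed
  obtain xm where xm: "xm \<in> feas a b p" "\<forall>z\<in>feas a b p. phiQ Q q xm \<le> phiQ Q q z" using solvable by blast
  have fb: "phiQ Q q xm \<le> f k" for k using xm xF unfolding f_def by blast
  have dec: "decseq f"
  proof (rule decseq_SucI)
    fix k
    have "0 \<le> (\<sigma>/2) * (norm (d k))^2" "0 \<le> \<alpha> * (lam k)^2 * (norm (d k))^2" using s0 alpha by auto
    thus "f (Suc k) \<le> f k" using fdec[of k] by linarith
  qed
  obtain L where fL: "f \<longlonglongrightarrow> L" and Lf: "\<forall>i. L \<le> f i"
    using decseq_convergent[OF dec, of "phiQ Q q xm"] fb by blast
  have fdiff: "(\<lambda>k. f k - f (Suc k)) \<longlonglongrightarrow> 0"
    using tendsto_diff[OF fL LIMSEQ_Suc[OF fL]] by simp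
  have dsq_bound: "(norm (d k))^2 \<le> (2/\<sigma>) * (f k - f (Suc k))" for k
  proof -
    have "0 \<le> \<alpha> * (lam k)^2 * (norm (d k))^2" using alpha by simp
    hence "(\<sigma>/2) * (norm (d k))^2 \<le> f k - f (Suc k)" using fdec[of k] by linarith
    thus ?thesis using s0 by (simp add: field_simps)
  qed
  have dsq: "(\<lambda>k. (norm (d k))^2) \<longlonglongrightarrow> 0"
  proof (rule tendsto_sandwich[of "\<lambda>_. 0" _ _ "\<lambda>k. (2/\<sigma>) * (f k - f (Suc k))"])
    show "\<forall>\<^sub>F n in sequentially. 0 \<le> (norm (d n))^2" by simp
    show "\<forall>\<^sub>F n in sequentially. (norm (d n))^2 \<le> (2/\<sigma>) * (f n - f (Suc n))" using dsq_bound by simp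
    show "(\<lambda>_. 0) \<longlonglongrightarrow> (0::real)" by simp
    show "(\<lambda>k. (2/\<sigma>) * (f k - f (Suc k))) \<longlonglongrightarrow> 0" using tendsto_mult_right_zero[OF fdiff, of "2/\<sigma>"] .
  qed
  have dn: "(\<lambda>k. norm (d k)) \<longlonglongrightarrow> 0"
    using tendsto_real_sqrt[OF dsq] by simp
  have phiy: "(\<lambda>k. phiQ Q q (y k)) \<longlonglongrightarrow> L"
    by (rule tendsto_sandwich[of "\<lambda>k. f (Suc k)" _ _ f]) (use fy1 fy2 LIMSEQ_Suc[OF fL] fL in auto)
  obtain \<delta> \<tau> where d0: "\<delta> > 0" and t0: "\<tau> \<ge> 0" and eb: "\<forall>J\<subseteq>{..<p}. \<forall>y r. y \<in> feas a b p \<longrightarrow> (\<forall>i\<in>J. a i \<bullet> y = b i) \<longrightarrow>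
           - (Q *v y + q) - r \<in> icone a J \<longrightarrow> norm r < \<delta> \<longrightarrow>
           (\<exists>z\<in>KK Q q a b p J. norm (y - z) \<le> \<tau> * norm r)"
    using EB[OF symQ, of p a b q] by blast
  obtain KM where KM: "KM > 0" "\<forall>v. norm (M *v v) \<le> norm v * KM"
    using bounded_linear.pos_bounded[OF matrix_vector_mul_bounded_linear[of M]] by blast
  obtain KQ where KQ: "KQ > 0" "\<forall>v. norm (Q *v v) \<le> norm v * KQ"
    using bounded_linear.pos_bounded[OF matrix_vector_mul_bounded_linear[of Q]] by blast
  have quadb: "\<bar>v \<bullet> (Q *v v)\<bar> \<le> KQ * (norm v)^2" for v
  proof -
    have "\<bar>v \<bullet> (Q *v v)\<bar> \<le> norm v * norm (Q *v v)" by (rule Cauchy_Schwarz_ineq2)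
    also have "\<dots> \<le> norm v * (norm v * KQ)" using KQ by (intro mult_left_mono) auto
    finally show ?thesis by (simp add: power2_eq_square algebra_simps)
  qed
  define c1 where "c1 = (1/2) * KQ * (\<tau> * KM)^2"
  have c10: "c1 \<ge> 0" unfolding c1_def using KQ by simp
  have nc: "- (Q *v y k + q) - M *v d k \<in> icone a (active a b p (y k))" for k
    unfolding M_def d_def by (rule normal_y[OF s0 yF ymin])
  define V where "V = phiQ Q q ` (\<Union>J\<in>Pow {..<p}. KK Q q a b p J)"
  have finV: "finite V" unfolding V_def by (rule KK_values_finite[OF symQ])
  define \<eta> where "\<eta> = Min (insert 1 ((\<lambda>v. \<bar>v - L\<bar>) ` (V - {L})))"
  have e0: "\<eta> > 0" unfolding \<eta>_def using finV by (auto simp: Min_gr_iff)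
  have etaV: "\<eta> \<le> \<bar>v - L\<bar>" if "v \<in> V" "v \<noteq> L" for v
    unfolding \<eta>_def using finV that by (intro Min_le) auto
  have ev1: "\<forall>\<^sub>F k in sequentially. norm (d k) < \<delta> / KM"
    using order_tendstoD(2)[OF dn] d0 KM by simp
  have ev2: "\<forall>\<^sub>F k in sequentially. dist (phiQ Q q (y k)) L < \<eta> / 2"
    using tendstoD[OF phiy, of "\<eta> / 2"] e0 by linarith
  have ev3: "\<forall>\<^sub>F k in sequentially. c1 * (norm (d k))^2 < \<eta> / 2"
    using order_tendstoD(2)[OF tendsto_mult_right_zero[OF dsq, of c1], of "\<eta> / 2"] e0 by simp
  obtain K0 where K0: "\<forall>k\<ge>K0. norm (d k) < \<delta> / KM \<and> dist (phiQ Q q (y k)) L < \<eta> / 2 \<and> c1 * (norm (d k))^2 < \<eta> / 2"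
    using eventually_conj[OF ev1 eventually_conj[OF ev2 ev3]] unfolding eventually_sequentially by blast
  have key: "phiQ Q q (y k) - L \<le> c1 * (norm (d k))^2" if kK: "k \<ge> K0" for k
  proof -
    define J where "J = active a b p (y k)"
    have Jp: "J \<subseteq> {..<p}" unfolding J_def active_def by auto
    have yJ: "\<forall>i\<in>J. a i \<bullet> y k = b i" unfolding J_def active_def by auto
    have k1: "norm (d k) < \<delta> / KM" and k2: "dist (phiQ Q q (y k)) L < \<eta> / 2"
      and k3: "c1 * (norm (d k))^2 < \<eta> / 2" using K0 kK by auto
    have rb: "norm (M *v d k) \<le> norm (d k) * KM" using KM by blast
    have "norm (d k) * KM < \<delta>" using k1 KM by (simp add: pos_less_divide_eq)
    hence rd: "norm (M *v d k) < \<delta>" using rb by linarith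
    obtain z where zK: "z \<in> KK Q q a b p J" and yz: "norm (y k - z) \<le> \<tau> * norm (M *v d k)"
      using eb Jp yF yJ nc[of k] rd unfolding J_def[symmetric] by blast
    have yz2: "norm (y k - z) \<le> \<tau> * KM * norm (d k)"
    proof -
      have "\<tau> * norm (M *v d k) \<le> \<tau> * (norm (d k) * KM)" using rb t0 by (intro mult_left_mono)
      thus ?thesis using yz by (simp add: algebra_simps)
    qed
    have ex: "phiQ Q q (y k) = phiQ Q q z + (1/2) * ((y k - z) \<bullet> (Q *v (y k - z)))"
      using phi_expand[OF symQ, of q "y k" z] KK_grad_zero[OF zK yJ] by simp
    have "\<bar>phiQ Q q (y k) - phiQ Q q z\<bar> \<le> (1/2) * (KQ * (norm (y k - z))^2)"
      using quadb[of "y k - z"] ex by simp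
    also have "\<dots> \<le> (1/2) * (KQ * (\<tau> * KM * norm (d k))^2)"
      using yz2 KQ by (intro mult_left_mono power_mono) auto
    also have "\<dots> = c1 * (norm (d k))^2" unfolding c1_def by (simp add: power_mult_distrib)
    finally have yzv: "\<bar>phiQ Q q (y k) - phiQ Q q z\<bar> \<le> c1 * (norm (d k))^2" .
    have zV: "phiQ Q q z \<in> V" unfolding V_def using zK Jp by blast
    have "\<bar>phiQ Q q z - L\<bar> < \<eta>" using yzv k2 k3 unfolding dist_real_def by linarith
    hence "phiQ Q q z = L" using etaV[OF zV] by force
    thus ?thesis using yzv by linarith
  qed
  define e where "e k = f k - L" for k
  have enn: "e k \<ge> 0" for k using Lf unfolding e_def by (simp add: algebra_simps)
  define c2 where "c2 = 2 * c1 / \<sigma>"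
  have c20: "c2 \<ge> 0" unfolding c2_def using c10 s0 by simp
  have erec: "e (Suc k) \<le> c2 * (e k - e (Suc k))" if kK: "k \<ge> K0" for k
  proof -
    have "e (Suc k) \<le> phiQ Q q (y k) - L" using fy1[of k] unfolding e_def by simp
    also have "\<dots> \<le> c1 * (norm (d k))^2" by (rule key[OF kK])
    also have "\<dots> \<le> c1 * ((2/\<sigma>) * (f k - f (Suc k)))" by (rule mult_left_mono[OF dsq_bound c10])
    also have "\<dots> = c2 * (e k - e (Suc k))" unfolding c2_def e_def by simp
    finally show ?thesis .
  qed
  define \<nu> where "\<nu> = max (1/2) (c2 / (1 + c2))"
  have nu1: "1/2 \<le> \<nu>" unfolding \<nu>_def by simp
  have nu2: "\<nu> < 1" unfolding \<nu>_def using c20 by simp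
  have estep: "e (Suc k) \<le> \<nu> * e k" if kK: "k \<ge> K0" for k
  proof -
    have "e (Suc k) * (1 + c2) \<le> c2 * e k" using erec[OF kK] by (simp add: algebra_simps)
    hence "e (Suc k) \<le> (c2 * e k) / (1 + c2)" using c20 by (simp add: pos_le_divide_eq)
    also have "\<dots> = (c2 / (1 + c2)) * e k" by simp
    also have "\<dots> \<le> \<nu> * e k" unfolding \<nu>_def using enn[of k] by (intro mult_right_mono) auto
    finally show ?thesis .
  qed
  have egeo: "e (K0 + j) \<le> \<nu>^j * e K0" for j
  proof (induction j)
    case 0 then show ?case by simp
  next
    case (Suc j)
    have "e (K0 + Suc j) = e (Suc (K0 + j))" by simp
    also have "\<dots> \<le> \<nu> * e (K0 + j)" by (rule estep) simp
    also have "\<dots> \<le> \<nu> * (\<nu>^j * e K0)" using Suc.IH nu1 by (intro mult_left_mono) auto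
    finally show ?case by simp
  qed
  define c0 where "c0 = min (\<sigma>/2) \<alpha>"
  have c00: "c0 > 0" unfolding c0_def using s0 alpha by simp
  have stepb: "(norm (x (Suc k) - x k))^2 \<le> (2/c0) * e k" for k
  proof -
    have xd: "x (Suc k) - x k = (1 + lam k) *\<^sub>R d k" using xs[of k] unfolding d_def by (simp add: algebra_simps)
    have n2: "(norm (x (Suc k) - x k))^2 = (1 + lam k)^2 * (norm (d k))^2"
      unfolding xd by (simp add: power_mult_distrib abs_of_nonneg[OF add_nonneg_nonneg[OF _ l0]])
    have sq: "(1 + lam k)^2 \<le> 2 * (1 + (lam k)^2)"
    proof -
      have "0 \<le> (1 - lam k)^2" by simp
      thus ?thesis by (simp add: power2_eq_square algebra_simps)
    qed
    have fd: "c0 * (1 + (lam k)^2) * (norm (d k))^2 \<le> f k - f (Suc k)"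
    proof -
      have "c0 * (norm (d k))^2 \<le> (\<sigma>/2) * (norm (d k))^2" unfolding c0_def by (intro mult_right_mono) auto
      moreover have "c0 * ((lam k)^2 * (norm (d k))^2) \<le> \<alpha> * ((lam k)^2 * (norm (d k))^2)"
        unfolding c0_def by (intro mult_right_mono) auto
      ultimately show ?thesis using fdec[of k] by (simp add: algebra_simps)
    qed
    have "(norm (x (Suc k) - x k))^2 \<le> 2 * (1 + (lam k)^2) * (norm (d k))^2"
      unfolding n2 using sq by (intro mult_right_mono) auto
    also have "\<dots> = (2/c0) * (c0 * (1 + (lam k)^2) * (norm (d k))^2)" using c00 by simp
    also have "\<dots> \<le> (2/c0) * (f k - f (Suc k))" using fd c00 by (intro mult_left_mono) auto
    also have "\<dots> \<le> (2/c0) * e k"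
      using enn[of "Suc k"] c00 unfolding e_def by (intro mult_left_mono) auto
    finally show ?thesis .
  qed
  define \<theta> where "\<theta> = sqrt \<nu>"
  have th0: "0 < \<theta>" unfolding \<theta>_def using nu1 by simp
  have th1: "\<theta> < 1" unfolding \<theta>_def using nu2 by simp
  define A where "A = sqrt ((2/c0) * e K0)"
  have A0: "A \<ge> 0" unfolding A_def using c00 enn[of K0] by simp
  define x' where "x' j = x (K0 + j)" for j
  have stepj: "norm (x' (Suc j) - x' j) \<le> A * \<theta>^j" for j
  proof -
    have "(norm (x' (Suc j) - x' j))^2 \<le> (2/c0) * e (K0 + j)"
      unfolding x'_def using stepb[of "K0 + j"] by simp
    also have "\<dots> \<le> (2/c0) * (\<nu>^j * e K0)" using egeo[of j] c00 by (intro mult_left_mono) auto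
    also have "\<dots> = (A * \<theta>^j)^2"
    proof -
      have "A^2 = (2/c0) * e K0" unfolding A_def using c00 enn[of K0] by simp
      moreover have "(\<theta>^j)^2 = \<nu>^j"
      proof -
        have "(\<theta>^j)^2 = (\<theta>^2)^j" by (simp add: power_mult[symmetric] mult.commute)
        moreover have "\<theta>^2 = \<nu>" unfolding \<theta>_def using nu1 by simp
        ultimately show ?thesis by simp
      qed
      ultimately show ?thesis by (simp add: power_mult_distrib)
    qed
    finally have sq: "(norm (x' (Suc j) - x' j))^2 \<le> (A * \<theta>^j)^2" .
    show ?thesis by (rule power2_le_imp_le[OF sq]) (use A0 th0 in simp)
  qed
  obtain l where x'l: "x' \<longlonglongrightarrow> l" and lb: "\<forall>j. norm (x' j - l) \<le> A * \<theta>^j / (1 - \<theta>)"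
  proof -
    have st: "\<forall>j. norm (x' (Suc j) - x' j) \<le> A * \<theta>^j" using stepj by blast
    show ?thesis using geom_conv[OF st th0 th1] that by blast
  qed
  have xl: "x \<longlonglongrightarrow> l"
  proof (rule LIMSEQ_offset[of _ K0])
    have "(\<lambda>n. x (n + K0)) = x'" by (simp add: x'_def fun_eq_iff add.commute)
    thus "(\<lambda>n. x (n + K0)) \<longlonglongrightarrow> l" using x'l by simp
  qed
  define C where "C = A / ((1 - \<theta>) * \<theta>^K0) + 1"
  have C0: "C > 0" unfolding C_def using A0 th0 th1 by (simp add: add_nonneg_pos)
  have rate: "\<forall>k\<ge>K0. norm (x k - l) \<le> C * \<theta>^k"
  proof (intro allI impI)
    fix k assume kK: "K0 \<le> k"
    define j where "j = k - K0"
    have kj: "k = K0 + j" unfolding j_def using kK by simp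
    have "norm (x k - l) \<le> A * \<theta>^j / (1 - \<theta>)" using lb unfolding x'_def kj by blast
    also have "\<dots> = (A / ((1 - \<theta>) * \<theta>^K0)) * \<theta>^k"
      unfolding kj using th0 th1 by (simp add: power_add field_simps)
    also have "\<dots> \<le> C * \<theta>^k" unfolding C_def using th0 by (intro mult_right_mono) auto
    finally show "norm (x k - l) \<le> C * \<theta>^k" .
  qed
  have dvec: "d \<longlonglongrightarrow> 0" using dn by (simp add: tendsto_norm_zero_iff)
  have yl': "y \<longlonglongrightarrow> l"
  proof -
    have "(\<lambda>k. x k + d k) \<longlonglongrightarrow> l + 0" by (intro tendsto_add xl dvec)
    moreover have "(\<lambda>k. x k + d k) = y" unfolding d_def by (simp add: fun_eq_iff)
    ultimately show ?thesis by simp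
  qed
  have lF: "l \<in> feas a b p"
    using closed_sequentially[OF poly_closed[of "{..<p}" a b] _ yl'] yF unfolding feas_eq by blast
  have vi: "\<forall>z\<in>feas a b p. (Q *v l + q) \<bullet> (z - l) \<ge> 0"
  proof
    fix z assume zF: "z \<in> feas a b p"
    have Mx: "(\<lambda>k. M *v x k) \<longlonglongrightarrow> M *v l"
      by (rule bounded_linear.tendsto[OF matrix_vector_mul_bounded_linear xl])
    have lim: "(\<lambda>k. (\<sigma> *\<^sub>R y k + q - M *v x k) \<bullet> (z - y k)) \<longlonglongrightarrow> (\<sigma> *\<^sub>R l + q - M *v l) \<bullet> (z - l)"
      by (intro tendsto_intros yl' Mx)
    have ge: "\<forall>k. 0 \<le> (\<sigma> *\<^sub>R y k + q - M *v x k) \<bullet> (z - y k)"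
      using first_order[OF yF ymin s0 zF] unfolding M_def by blast
    have "0 \<le> (\<sigma> *\<^sub>R l + q - M *v l) \<bullet> (z - l)"
      by (rule LIMSEQ_le_const[OF lim]) (use ge in blast)
    moreover have "\<sigma> *\<^sub>R l + q - M *v l = Q *v l + q" unfolding M_def Mvec by simp
    ultimately show "(Q *v l + q) \<bullet> (z - l) \<ge> 0" by simp
  qed
  have "kkt Q q a b p l" by (rule kkt_of_vi[OF lF vi])
  moreover have r1: "\<exists>K. \<forall>k\<ge>K. norm (x k - l) \<le> C * \<theta>^k" using rate by blast
  hence r2: "\<exists>\<mu>. 0 < \<mu> \<and> \<mu> < 1 \<and> (\<exists>K. \<forall>k\<ge>K. norm (x k - l) \<le> C * \<mu>^k)"
    using th0 th1 by blast
  hence "\<exists>C>0. \<exists>\<mu>. 0 < \<mu> \<and> \<mu> < 1 \<and> (\<exists>K. \<forall>k\<ge>K. norm (x k - l) \<le> C * \<mu>^k)"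
    using C0 by blast
  ultimately show ?thesis using xl by blast
qed

end
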